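(* Let $a<b$, $n\in\mathbb N$, and $\alpha=(\alpha_1,\ldots,\alpha_n)$ with $\alpha_i\in(i-1,i)$. Fix reals $z_a$ and $x^j_{ia}$ for $i\in\{1,\ldots,n\}$, $j\in\{0,\ldots,i-1\}$. Call $x=(x_1,\ldots,x_n)$ admissible if $x_i\in C^n([a,b],\mathbb R)$, ${^C_aD^{\alpha_i}_t}x_i\in C^1([a,b],\mathbb R)$ and $x_i^{(j)}(a)=x^j_{ia}$ for all $i$ and $j\in\{0,\ldots,i-1\}$ (the values $x_i^{(j)}(b)$ are free). Let $L:[a,b]\times\mathbb R^{2n+1}\to\mathbb R$, $L=L(t,x,v,z)$, be of class $C^1$, and for admissible $x$ let $z[x;\cdot]$ solve $\dot z(t)=L(t,x(t),{^C_aD^\alpha_t}x(t),z(t))$, $t\in[a,b]$, $z(a)=z_a$, where ${^C_aD^\alpha_t}x=({^C_aD^{\alpha_1}_t}x_1,\ldots,{^C_aD^{\alpha_n}_t}x_n)$. Write $[x,z](t):=(t,x(t),{^C_aD^\alpha_t}x(t),z(t))$, $\lambda(t):=\exp\left(-\int_a^t\frac{\partial L}{\partial z}[x,z](\tau)\,d\tau\right)$, and assume ${_tD^{\alpha_i}_b}\left(\lambda(t)\frac{\partial L}{\partial {^C_aD^{\alpha_i}_t}x_i}[x,z](t)\right)$ exists and is continuous on $[a,b]$ for each $i$. If $x$ is admissible and $z[x;b]$ attains an extremum (so $\frac{d}{d\epsilon}z[x+\epsilon\eta;b]|_{\epsilon=0}=0$ for all $\eta$ of the same regularity with $\eta_i^{(j)}(a)=0$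 for all $i$, $j\in\{0,\ldots,i-1\}$), then $(x_1,\ldots,x_n,z)$ satisfies on $[a,b]$ $$\lambda(t)\frac{\partial L}{\partial x_i}[x,z](t)+{_tD^{\alpha_i}_b}\left(\lambda(t)\frac{\partial L}{\partial {^C_aD^{\alpha_i}_t}x_i}[x,z](t)\right)=0,\quad i=1,\ldots,n,$$ and the transversality conditions $${_tD^{\alpha_i+j-i}_b}\left(\lambda(t)\frac{\partial L}{\partial {^C_aD^{\alpha_i}_t}x_i}[x,z](t)\right)\Big|_{t=b}=0$$ for all $i\in\{1,\ldots,n\}$ and all $j\in\{0,\ldots,i-1\}$.
   Context: For $\alpha>0$, $m=[\alpha]+1$ and $f:[a,b]\to\mathbb R$: left Caputo derivative ${^C_aD^\alpha_t}f(t)=\frac{1}{\Gamma(m-\alpha)}\int_a^t(t-\tau)^{m-\alpha-1}f^{(m)}(\tau)\,d\tau$; right Riemann–Liouville derivative ${_tD^\alpha_b}f(t)=\frac{(-1)^m}{\Gamma(m-\alpha)}\frac{d^m}{dt^m}\int_t^b(\tau-t)^{m-\alpha-1}f(\tau)\,d\tau$. For a negative order $-\beta<0$, ${_tD^{-\beta}_b}$ denotes the right Riemann–Liouville integral ${_tI^{\beta}_b}f(t)=\frac{1}{\Gamma(\beta)}\int_t^b(\tau-t)^{\beta-1}f(\tau)\,d\tau$. Partial derivatives of $L$ are with respect to the corresponding components of its arguments $(t,x,v,z)$; $\frac{\partial L}{\partial {^C_aD^{\alpha_i}_t}x_i}$ means $\partial L/\partial v_i$. The solution $z$ is assumed to exist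 and depend differentiably on a parameter $\epsilon$ when $x$ is replaced by $x+\epsilon\eta$, with the same initial value $z_a$. *)

theory Defs
  imports "HOL-Analysis.Analysis"
begin

fun hderiv :: "nat \<Rightarrow> real set \<Rightarrow> (real \<Rightarrow> real) \<Rightarrow> real \<Rightarrow> real" where
  "hderiv 0 S f = f"
| "hderiv (Suc k) S f = (\<lambda>t. vector_derivative (hderiv k S f) (at t within S))"

definition Cn_on :: "nat \<Rightarrow> real set \<Rightarrow> (real \<Rightarrow> real) \<Rightarrow> bool" where
  "Cn_on m S f \<longleftrightarrow>
     (\<forall>k<m. \<forall>t\<in>S. (hderiv k S f has_vector_derivative hderiv (Suc k) S f t) (at t within S))
     \<and> continuous_on S (hderiv m S f)"

definition caputoL :: "real \<Rightarrow> real \<Rightarrow> real \<Rightarrow> (real \<Rightarrow> real) \<Rightarrow> real \<Rightarrow> real" where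
  "caputoL a b al f t =
     (let m = nat \<lfloor>al\<rfloor> + 1 in
      integral {a..t} (\<lambda>\<tau>. (t - \<tau>) powr (real m - al - 1) * hderiv m {a..b} f \<tau>)
        / Gamma (real m - al))"

definition rRL_int :: "real \<Rightarrow> real \<Rightarrow> (real \<Rightarrow> real) \<Rightarrow> real \<Rightarrow> real" where
  "rRL_int b be f t = integral {t..b} (\<lambda>\<tau>. (\<tau> - t) powr (be - 1) * f \<tau>) / Gamma be"

definition rRL_deriv :: "real \<Rightarrow> real \<Rightarrow> real \<Rightarrow> (real \<Rightarrow> real) \<Rightarrow> real \<Rightarrow> real" where
  "rRL_deriv a b al f t =
     (let m = nat \<lfloor>al\<rfloor> + 1 in
      (-1) ^ m * hderiv m {a..b} (rRL_int b (real m - al) f) t)"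

definition rRL_deriv_exists_cont :: "real \<Rightarrow> real \<Rightarrow> real \<Rightarrow> (real \<Rightarrow> real) \<Rightarrow> bool" where
  "rRL_deriv_exists_cont a b al f \<longleftrightarrow>
     Cn_on (nat \<lfloor>al\<rfloor> + 1) {a..b} (rRL_int b (real (nat \<lfloor>al\<rfloor> + 1) - al) f)"

text \<open>Operator of arbitrary real order: negative order = RL integral.\<close>
definition rRL :: "real \<Rightarrow> real \<Rightarrow> real \<Rightarrow> (real \<Rightarrow> real) \<Rightarrow> real \<Rightarrow> real" where
  "rRL a b al f t = (if al < 0 then rRL_int b (- al) f t else rRL_deriv a b al f t)"

section \<open>Vectors in R^n as functions nat => real supported on {1..n}\<close>

definition vecn :: "nat \<Rightarrow> (nat \<Rightarrow> real) \<Rightarrow> nat \<Rightarrow> real" where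
  "vecn n f = (\<lambda>i. if 1 \<le> i \<and> i \<le> n then f i else 0)"

text \<open>The domain [a,b] x R^(2n+1) of the Lagrangian L(t,x,v,z).\<close>
definition Ldom :: "nat \<Rightarrow> real \<Rightarrow> real \<Rightarrow> (real \<times> (nat \<Rightarrow> real) \<times> (nat \<Rightarrow> real) \<times> real) set" where
  "Ldom n a b = {(t, x, v, z). t \<in> {a..b} \<and> (\<forall>i. \<not> (1 \<le> i \<and> i \<le> n) \<longrightarrow> x i = 0 \<and> v i = 0)}"

type_synonym lagr = "real \<Rightarrow> (nat \<Rightarrow> real) \<Rightarrow> (nat \<Rightarrow> real) \<Rightarrow> real \<Rightarrow> real"

definition pLx :: "lagr \<Rightarrow> nat \<Rightarrow> real \<Rightarrow> (nat \<Rightarrow> real) \<Rightarrow> (nat \<Rightarrow> real) \<Rightarrow> real \<Rightarrow> real" where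
  "pLx L i t x v z = deriv (\<lambda>s. L t (x(i := s)) v z) (x i)"
definition pLv :: "lagr \<Rightarrow> nat \<Rightarrow> real \<Rightarrow> (nat \<Rightarrow> real) \<Rightarrow> (nat \<Rightarrow> real) \<Rightarrow> real \<Rightarrow> real" where
  "pLv L i t x v z = deriv (\<lambda>s. L t x (v(i := s)) z) (v i)"
definition pLz :: "lagr \<Rightarrow> real \<Rightarrow> (nat \<Rightarrow> real) \<Rightarrow> (nat \<Rightarrow> real) \<Rightarrow> real \<Rightarrow> real" where
  "pLz L t x v z = deriv (\<lambda>s. L t x v s) z"

definition C1_lagr :: "nat \<Rightarrow> real \<Rightarrow> real \<Rightarrow> lagr \<Rightarrow> bool" where
  "C1_lagr n a b L \<longleftrightarrow>
    (\<exists>Lt Lx Lv Lz.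
      (\<forall>(t, x, v, z) \<in> Ldom n a b.
          ((\<lambda>s. L s x v z) has_real_derivative Lt (t, x, v, z)) (at t within {a..b})
        \<and> (\<forall>i\<in>{1..n}. ((\<lambda>s. L t (x(i := s)) v z) has_real_derivative Lx i (t, x, v, z)) (at (x i)))
        \<and> (\<forall>i\<in>{1..n}. ((\<lambda>s. L t x (v(i := s)) z) has_real_derivative Lv i (t, x, v, z)) (at (v i)))
        \<and> ((\<lambda>s. L t x v s) has_real_derivative Lz (t, x, v, z)) (at z))
      \<and> continuous_on (Ldom n a b) Lt
      \<and> (\<forall>i\<in>{1..n}. continuous_on (Ldom n a b) (Lx i) \<and> continuous_on (Ldom n a b) (Lv i))
      \<and> continuous_on (Ldom n a b) Lz)"

definition admissible ::
  "nat \<Rightarrow> real \<Rightarrow> real \<Rightarrow> (nat \<Rightarrow> real) \<Rightarrow> (nat \<Rightarrow> nat \<Rightarrow> real) \<Rightarrow> (nat \<Rightarrow> real \<Rightarrow> real) \<Rightarrow> bool" where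
  "admissible n a b al xa x \<longleftrightarrow>
     (\<forall>i\<in>{1..n}. Cn_on n {a..b} (x i)
        \<and> Cn_on 1 {a..b} (caputoL a b (al i) (x i))
        \<and> (\<forall>j<i. hderiv j {a..b} (x i) a = xa i j))"

definition xvec :: "nat \<Rightarrow> (nat \<Rightarrow> real \<Rightarrow> real) \<Rightarrow> real \<Rightarrow> nat \<Rightarrow> real" where
  "xvec n x t = vecn n (\<lambda>i. x i t)"
definition cvec :: "nat \<Rightarrow> real \<Rightarrow> real \<Rightarrow> (nat \<Rightarrow> real) \<Rightarrow> (nat \<Rightarrow> real \<Rightarrow> real) \<Rightarrow> real \<Rightarrow> nat \<Rightarrow> real" where
  "cvec n a b al x t = vecn n (\<lambda>i. caputoL a b (al i) (x i) t)"

end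

theory Submission
  imports Defs "HOL-Computational_Algebra.Polynomial"
begin


lemma mvt_gen:
  fixes f f' :: "real \<Rightarrow> real"
  assumes "\<And>s. (f has_real_derivative f' s) (at s)"
  shows "\<exists>\<xi>. min p0 p1 \<le> \<xi> \<and> \<xi> \<le> max p0 p1 \<and> f p1 - f p0 = (p1 - p0) * f' \<xi>"
proof (cases "p0 < p1")
  case True
  from MVT2[OF True, of f f'] assms obtain z where "p0 < z" "z < p1" "f p1 - f p0 = (p1 - p0) * f' z" by blast
  then show ?thesis by (intro exI[of _ z]) auto
next
  case False
  show ?thesis
  proof (cases "p1 < p0")
    case True
    from MVT2[OF True, of f f'] assms obtain z where "p1 < z" "z < p0" "f p0 - f p1 = (p0 - p1) * f' z" by blast
    then show ?thesis by (intro exI[of _ z]) (auto simp: algebra_simps)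
  next
    case False
    with \<open>\<not> p0 < p1\<close> have "p1 = p0" by auto
    then show ?thesis by (intro exI[of _ p0]) auto
  qed
qed

lemma gronwall:
  fixes u :: "real \<Rightarrow> real"
  assumes "continuous_on {a..T} u" "K \<ge> 0"
    and le: "\<And>t. t\<in>{a..T} \<Longrightarrow> u t \<le> C + K * integral {a..t} u"
    and t: "t \<in> {a..T}"
  shows "u t \<le> C * exp (K*(t-a))"
proof -
  define v where "v s = C + K * integral {a..s} u" for s
  define w where "w s = exp (-K*(s-a)) * v s" for s
  define w' where "w' s = exp (-K*(s-a)) * (K * u s - K * v s)" for s
  have dv: "(v has_real_derivative K * u s) (at s within {a..T})" if "s\<in>{a..T}" for s
    unfolding v_def using integral_has_real_derivative[OF assms(1) that]
    by (auto intro!: derivative_eq_intros)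
  have dw: "(w has_real_derivative w' s) (at s within {a..T})" if "s\<in>{a..T}" for s
    unfolding w_def w'_def
    by (rule derivative_eq_intros dv[OF that] refl)+ (simp add: algebra_simps)
  have dw2: "(w has_vector_derivative w' s) (at s within {a..t})" if "s\<in>{a..t}" for s
    using dw[of s] that t has_real_derivative_iff_has_vector_derivative
    by (metis atLeastAtMost_iff atLeastatMost_subset_iff dual_order.refl has_vector_derivative_within_subset order.trans)
  have ftc: "(w' has_integral (w t - w a)) {a..t}"
    using t by (intro fundamental_theorem_of_calculus dw2) auto
  have "w' s \<le> 0" if "s \<in> {a..t}" for s
  proof -
    have "u s \<le> v s" using le[of s] that t unfolding v_def by auto
    then show ?thesis unfolding w'_def using assms(2)
      by (intro mult_nonneg_nonpos) (auto simp: mult_left_mono)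
  qed
  then have "w t - w a \<le> 0"
    using has_integral_le[OF ftc has_integral_0[of "{a..t}"]] by auto
  moreover have "w a = C" unfolding w_def v_def by simp
  ultimately have "exp (-K*(t-a)) * v t \<le> C" unfolding w_def by simp
  then have "exp (-K*(t-a)) * v t * exp (K*(t-a)) \<le> C * exp (K*(t-a))"
    by (intro mult_right_mono) auto
  moreover have "exp (-K*(t-a)) * v t * exp (K*(t-a)) = v t"
  proof -
    have e: "exp (-K*(t-a)) * exp (K*(t-a)) = 1" by (simp flip: exp_add)
    have "exp (-K*(t-a)) * v t * exp (K*(t-a)) = v t * (exp (-K*(t-a)) * exp (K*(t-a)))"
      by (simp only: ac_simps)
    then show ?thesis using e by simp
  qed
  ultimately have "v t \<le> C * exp (K*(t-a))" by linarith
  moreover have "u t \<le> v t" using le[OF t] unfolding v_def .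
  ultimately show ?thesis by simp
qed

lemma bound_on_compact:
  fixes f :: "'a::metric_space \<Rightarrow> real"
  assumes "compact S" "continuous_on S f"
  shows "\<exists>B\<ge>0. \<forall>x\<in>S. \<bar>f x\<bar> \<le> B"
proof -
  have "bounded (f ` S)" using compact_continuous_image[OF assms(2,1)] compact_imp_bounded by blast
  then obtain B where "\<forall>y\<in>f`S. norm y \<le> B" using bounded_iff by blast
  then show ?thesis by (intro exI[of _ "max B 0"]) auto
qed

lemma dist4_le:
  fixes t p q z p' q' z' :: real
  shows "dist (t,p,q,z) (t,p',q',z') \<le> \<bar>p-p'\<bar> + \<bar>q-q'\<bar> + \<bar>z-z'\<bar>"
proof -
  have "dist (t,p,q,z) (t,p',q',z') = norm (0::real, p-p', q-q', z-z')"
    by (simp add: dist_norm)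
  also have "\<dots> \<le> norm (0::real) + norm (p-p', q-q', z-z')" by (rule norm_Pair_le)
  also have "norm (p-p', q-q', z-z') \<le> norm (p-p') + norm (q-q', z-z')" by (rule norm_Pair_le)
  also have "norm (q-q', z-z') \<le> norm (q-q') + norm (z-z')" by (rule norm_Pair_le)
  finally show ?thesis by simp
qed

lemma mvt3:
  fixes l lp lq lz :: "real \<Rightarrow> real \<Rightarrow> real \<Rightarrow> real"
  assumes dp: "\<And>p q z. ((\<lambda>s. l s q z) has_real_derivative lp p q z) (at p)"
    and dq: "\<And>p q z. ((\<lambda>s. l p s z) has_real_derivative lq p q z) (at q)"
    and dz: "\<And>p q z. ((\<lambda>s. l p q s) has_real_derivative lz p q z) (at z)"
  shows "\<exists>\<xi>1 \<xi>2 \<xi>3. min p0 p1 \<le> \<xi>1 \<and> \<xi>1 \<le> max p0 p1 \<and> min q0 q1 \<le> \<xi>2 \<and> \<xi>2 \<le> max q0 q1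
     \<and> min z0 z1 \<le> \<xi>3 \<and> \<xi>3 \<le> max z0 z1 \<and>
     l p1 q1 z1 - l p0 q0 z0 = (p1 - p0) * lp \<xi>1 q1 z1 + (q1 - q0) * lq p0 \<xi>2 z1 + (z1 - z0) * lz p0 q0 \<xi>3"
proof -
  obtain \<xi>1 where 1: "min p0 p1 \<le> \<xi>1" "\<xi>1 \<le> max p0 p1" "l p1 q1 z1 - l p0 q1 z1 = (p1 - p0) * lp \<xi>1 q1 z1"
    using mvt_gen[of "\<lambda>s. l s q1 z1" "\<lambda>s. lp s q1 z1" p0 p1] dp by blast
  obtain \<xi>2 where 2: "min q0 q1 \<le> \<xi>2" "\<xi>2 \<le> max q0 q1" "l p0 q1 z1 - l p0 q0 z1 = (q1 - q0) * lq p0 \<xi>2 z1"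
    using mvt_gen[of "\<lambda>s. l p0 s z1" "\<lambda>s. lq p0 s z1" q0 q1] dq by blast
  obtain \<xi>3 where 3: "min z0 z1 \<le> \<xi>3" "\<xi>3 \<le> max z0 z1" "l p0 q0 z1 - l p0 q0 z0 = (z1 - z0) * lz p0 q0 \<xi>3"
    using mvt_gen[of "\<lambda>s. l p0 q0 s" "\<lambda>s. lz p0 q0 s" z0 z1] dz by blast
  show ?thesis
    by (rule exI[of _ \<xi>1], rule exI[of _ \<xi>2], rule exI[of _ \<xi>3]) (use 1 2 3 in auto)
qed


lemma ode_lin:
  fixes l lp lq lz :: "real \<Rightarrow> real \<Rightarrow> real \<Rightarrow> real \<Rightarrow> real"
    and P Q E DE :: "real \<Rightarrow> real" and y :: "real \<Rightarrow> real \<Rightarrow> real"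
  assumes ab: "a < b"
    and dp: "\<And>t p q z. t \<in> {a..b} \<Longrightarrow> ((\<lambda>s. l t s q z) has_real_derivative lp t p q z) (at p)"
    and dq: "\<And>t p q z. t \<in> {a..b} \<Longrightarrow> ((\<lambda>s. l t p s z) has_real_derivative lq t p q z) (at q)"
    and dz: "\<And>t p q z. t \<in> {a..b} \<Longrightarrow> ((\<lambda>s. l t p q s) has_real_derivative lz t p q z) (at z)"
    and cp: "continuous_on ({a..b} \<times> UNIV) (\<lambda>(t,p,q,z). lp t p q z)"
    and cq: "continuous_on ({a..b} \<times> UNIV) (\<lambda>(t,p,q,z). lq t p q z)"
    and cz: "continuous_on ({a..b} \<times> UNIV) (\<lambda>(t,p,q,z). lz t p q z)"
    and cP: "continuous_on {a..b} P" and cQ: "continuous_on {a..b} Q"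
    and cE: "continuous_on {a..b} E" and cDE: "continuous_on {a..b} DE"
    and ya: "\<And>\<epsilon>. y \<epsilon> a = y 0 a"
    and yd: "\<And>\<epsilon> t. t \<in> {a..b} \<Longrightarrow>
       (y \<epsilon> has_real_derivative l t (P t + \<epsilon> * E t) (Q t + \<epsilon> * DE t) (y \<epsilon> t)) (at t within {a..b})"
  shows "((\<lambda>\<epsilon>. y \<epsilon> b) has_real_derivative
      integral {a..b} (\<lambda>t. exp (- integral {a..t} (\<lambda>\<tau>. lz \<tau> (P \<tau>) (Q \<tau>) (y 0 \<tau>)))
          * (lp t (P t) (Q t) (y 0 t) * E t + lq t (P t) (Q t) (y 0 t) * DE t))
        / exp (- integral {a..b} (\<lambda>\<tau>. lz \<tau> (P \<tau>) (Q \<tau>) (y 0 \<tau>)))) (at 0)"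
proof -
  define y0 where "y0 = y 0"
  define A0 where "A0 t = lz t (P t) (Q t) (y0 t)" for t
  define mu where "mu t = exp (- integral {a..t} A0)" for t
  define Tg where "Tg t = mu t * (lp t (P t) (Q t) (y0 t) * E t + lq t (P t) (Q t) (y0 t) * DE t)" for t
  define F where "F e t = l t (P t + e * E t) (Q t + e * DE t) (y e t)" for e t
  have cy: "continuous_on {a..b} (y e)" for e
    using yd DERIV_continuous continuous_on_eq_continuous_within by blast
  have tup: "continuous_on {a..b} (\<lambda>t. (t, P t, Q t, y0 t))"
    unfolding y0_def by (intro continuous_intros cP cQ cy)
  have cA0: "continuous_on {a..b} A0"
    using continuous_on_compose2[OF cz tup] unfolding A0_def by auto
  have cTg0: "continuous_on {a..b} (\<lambda>t. lp t (P t) (Q t) (y0 t) * E t + lq t (P t) (Q t) (y0 t) * DE t)"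
    using continuous_on_compose2[OF cp tup] continuous_on_compose2[OF cq tup]
    by (intro continuous_intros cE cDE) auto
  have dmu: "(mu has_real_derivative - A0 t * mu t) (at t within {a..b})" if "t \<in> {a..b}" for t
    unfolding mu_def
    by (rule derivative_eq_intros integral_has_real_derivative[OF cA0 that] refl)+ simp
  have cmu: "continuous_on {a..b} mu"
    using dmu DERIV_continuous continuous_on_eq_continuous_within by blast
  have cTg: "continuous_on {a..b} Tg"
    unfolding Tg_def by (intro continuous_intros cmu cTg0)
  have mupos: "mu t > 0" for t unfolding mu_def by simp
  obtain B1 where B1: "\<forall>t\<in>{a..b}. \<bar>P t\<bar> \<le> B1" using bound_on_compact[OF compact_Icc cP] by blast
  obtain B2 where B2: "\<forall>t\<in>{a..b}. \<bar>Q t\<bar> \<le> B2" using bound_on_compact[OF compact_Icc cQ] by blast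
  obtain B3 where B3: "\<forall>t\<in>{a..b}. \<bar>E t\<bar> \<le> B3" using bound_on_compact[OF compact_Icc cE] by blast
  obtain B4 where B4: "\<forall>t\<in>{a..b}. \<bar>DE t\<bar> \<le> B4" using bound_on_compact[OF compact_Icc cDE] by blast
  obtain B5 where B5: "\<forall>t\<in>{a..b}. \<bar>y0 t\<bar> \<le> B5" using bound_on_compact[OF compact_Icc cy] unfolding y0_def by blast
  obtain Mmu where Mmu: "Mmu \<ge> 0" "\<forall>t\<in>{a..b}. \<bar>mu t\<bar> \<le> Mmu" using bound_on_compact[OF compact_Icc cmu] by blast
  define B where "B = max (max (max B1 B2) (max B3 B4)) (max B5 0)"
  have B0: "B \<ge> 0" unfolding B_def by auto
  have bP: "\<bar>P t\<bar> \<le> B" "\<bar>Q t\<bar> \<le> B" "\<bar>E t\<bar> \<le> B" "\<bar>DE t\<bar> \<le> B" "\<bar>y0 t\<bar> \<le> B" if "t \<in> {a..b}" for t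
  proof -
    have "B1 \<le> B" "B2 \<le> B" "B3 \<le> B" "B4 \<le> B" "B5 \<le> B" unfolding B_def by auto
    then show "\<bar>P t\<bar> \<le> B" "\<bar>Q t\<bar> \<le> B" "\<bar>E t\<bar> \<le> B" "\<bar>DE t\<bar> \<le> B" "\<bar>y0 t\<bar> \<le> B"
      using B1 B2 B3 B4 B5 that by (meson order_trans)+
  qed
  define R where "R = 2 * B + 1"
  define K where "K = {a..b} \<times> {-R..R} \<times> {-R..R} \<times> {-R..R}"
  have cK: "compact K" unfolding K_def by (intro compact_Times compact_Icc)
  have KU: "K \<subseteq> {a..b} \<times> UNIV" unfolding K_def by auto
  obtain C1 where C1: "C1 \<ge> 0" "\<forall>x\<in>K. \<bar>(\<lambda>(t,p,q,z). lp t p q z) x\<bar> \<le> C1"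
    using bound_on_compact[OF cK continuous_on_subset[OF cp KU]] by blast
  obtain C2 where C2: "C2 \<ge> 0" "\<forall>x\<in>K. \<bar>(\<lambda>(t,p,q,z). lq t p q z) x\<bar> \<le> C2"
    using bound_on_compact[OF cK continuous_on_subset[OF cq KU]] by blast
  obtain C3 where C3: "C3 \<ge> 0" "\<forall>x\<in>K. \<bar>(\<lambda>(t,p,q,z). lz t p q z) x\<bar> \<le> C3"
    using bound_on_compact[OF cK continuous_on_subset[OF cz KU]] by blast
  define CL where "CL = max (max C1 C2) C3"
  have CL0: "CL \<ge> 0" unfolding CL_def using C1 by auto
  have inK: "(t,p,q,z) \<in> K" if "t \<in> {a..b}" "\<bar>p\<bar> \<le> R" "\<bar>q\<bar> \<le> R" "\<bar>z\<bar> \<le> R" for t p q z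
    using that unfolding K_def by auto
  have bl: "\<bar>lp t p q z\<bar> \<le> CL" "\<bar>lq t p q z\<bar> \<le> CL" "\<bar>lz t p q z\<bar> \<le> CL"
    if "t \<in> {a..b}" "\<bar>p\<bar> \<le> R" "\<bar>q\<bar> \<le> R" "\<bar>z\<bar> \<le> R" for t p q z
  proof -
    have "C1 \<le> CL" "C2 \<le> CL" "C3 \<le> CL" unfolding CL_def by auto
    moreover have "\<bar>lp t p q z\<bar> \<le> C1" "\<bar>lq t p q z\<bar> \<le> C2" "\<bar>lz t p q z\<bar> \<le> C3"
      using C1(2) C2(2) C3(2) inK[OF that] by auto
    ultimately show "\<bar>lp t p q z\<bar> \<le> CL" "\<bar>lq t p q z\<bar> \<le> CL" "\<bar>lz t p q z\<bar> \<le> CL" by linarith+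
  qed
  have split: "\<exists>\<xi>1 \<xi>2 \<xi>3. \<bar>\<xi>1 - P t\<bar> \<le> \<bar>e\<bar> * B \<and> \<bar>\<xi>1\<bar> \<le> R \<and> \<bar>\<xi>2 - Q t\<bar> \<le> \<bar>e\<bar> * B \<and> \<bar>\<xi>2\<bar> \<le> R
      \<and> \<bar>\<xi>3 - y0 t\<bar> \<le> \<bar>y e t - y0 t\<bar> \<and> \<bar>\<xi>3\<bar> \<le> R \<and> \<bar>Q t + e * DE t\<bar> \<le> R \<and> \<bar>y e t\<bar> \<le> R \<and>
      F e t - F 0 t = e * E t * lp t \<xi>1 (Q t + e * DE t) (y e t) + e * DE t * lq t (P t) \<xi>2 (y e t)
         + (y e t - y0 t) * lz t (P t) (Q t) \<xi>3"
    if t: "t \<in> {a..b}" and e1: "\<bar>e\<bar> \<le> 1" and ye: "\<bar>y e t - y0 t\<bar> \<le> 1" for e t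
  proof -
    obtain \<xi>1 \<xi>2 \<xi>3 where xi: "min (P t) (P t + e * E t) \<le> \<xi>1" "\<xi>1 \<le> max (P t) (P t + e * E t)"
       "min (Q t) (Q t + e * DE t) \<le> \<xi>2" "\<xi>2 \<le> max (Q t) (Q t + e * DE t)"
       "min (y0 t) (y e t) \<le> \<xi>3" "\<xi>3 \<le> max (y0 t) (y e t)"
       "l t (P t + e * E t) (Q t + e * DE t) (y e t) - l t (P t) (Q t) (y0 t) =
         (P t + e * E t - P t) * lp t \<xi>1 (Q t + e * DE t) (y e t) + (Q t + e * DE t - Q t) * lq t (P t) \<xi>2 (y e t)
          + (y e t - y0 t) * lz t (P t) (Q t) \<xi>3"
      using mvt3[of "l t" "lp t" "lq t" "lz t" "P t" "P t + e * E t" "Q t" "Q t + e * DE t" "y0 t" "y e t"]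
        dp[OF t] dq[OF t] dz[OF t] by blast
    have eE: "\<bar>e * E t\<bar> \<le> \<bar>e\<bar> * B" "\<bar>e * DE t\<bar> \<le> \<bar>e\<bar> * B"
      using bP[OF t] by (auto simp: abs_mult intro: mult_left_mono)
    have eB: "\<bar>e\<bar> * B \<le> B" using e1 B0 by (simp add: mult_left_le_one_le)
    have 1: "\<bar>\<xi>1 - P t\<bar> \<le> \<bar>e\<bar> * B" using xi(1,2) eE by (auto simp: min_def max_def split: if_splits)
    have 2: "\<bar>\<xi>2 - Q t\<bar> \<le> \<bar>e\<bar> * B" using xi(3,4) eE by (auto simp: min_def max_def split: if_splits)
    have 3: "\<bar>\<xi>3 - y0 t\<bar> \<le> \<bar>y e t - y0 t\<bar>" using xi(5,6) by (auto simp: min_def max_def split: if_splits)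
    have r1: "\<bar>\<xi>1\<bar> \<le> R" using 1 eB bP(1)[OF t] unfolding R_def by linarith
    have r2: "\<bar>\<xi>2\<bar> \<le> R" using 2 eB bP(2)[OF t] unfolding R_def by linarith
    have r3: "\<bar>\<xi>3\<bar> \<le> R" using 3 ye bP(5)[OF t] B0 unfolding R_def by linarith
    have r4: "\<bar>Q t + e * DE t\<bar> \<le> R" using eE eB bP(2)[OF t] unfolding R_def by linarith
    have r5: "\<bar>y e t\<bar> \<le> R" using ye bP(5)[OF t] B0 unfolding R_def by linarith
    have eq: "F e t - F 0 t = e * E t * lp t \<xi>1 (Q t + e * DE t) (y e t) + e * DE t * lq t (P t) \<xi>2 (y e t)
         + (y e t - y0 t) * lz t (P t) (Q t) \<xi>3"
      using xi(7) unfolding F_def y0_def by simp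
    show ?thesis using 1 2 3 r1 r2 r3 r4 r5 eq by blast
  qed
  have Fd: "((\<lambda>t. y e t - y0 t) has_real_derivative F e t - F 0 t) (at t within {a..b})"
    if "t\<in>{a..b}" for e t
    using DERIV_diff[OF yd[OF that, of e] yd[OF that, of 0]] unfolding F_def y0_def by simp
  define A where "A = CL * (2*B) * (b-a) * exp (CL*(b-a))"
  have Anonneg: "A \<ge> 0" unfolding A_def using CL0 B0 ab by auto
  have Fbound: "\<bar>F e t - F 0 t\<bar> \<le> CL*(2*B)*\<bar>e\<bar> + CL*\<bar>y e t - y0 t\<bar>"
    if t: "t \<in> {a..b}" and e1: "\<bar>e\<bar> \<le> 1" and ye: "\<bar>y e t - y0 t\<bar> \<le> 1" for e t
  proof -
    obtain \<xi>1 \<xi>2 \<xi>3 where xi: "\<bar>\<xi>1\<bar> \<le> R" "\<bar>\<xi>2\<bar> \<le> R" "\<bar>\<xi>3\<bar> \<le> R" "\<bar>Q t + e * DE t\<bar> \<le> R"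
      "\<bar>y e t\<bar> \<le> R" "F e t - F 0 t = e * E t * lp t \<xi>1 (Q t + e * DE t) (y e t) + e * DE t * lq t (P t) \<xi>2 (y e t)
         + (y e t - y0 t) * lz t (P t) (Q t) \<xi>3"
      using split[OF t e1 ye] by blast
    have RP: "\<bar>P t\<bar> \<le> R" "\<bar>Q t\<bar> \<le> R" using bP[OF t] B0 unfolding R_def by auto
    have 1: "\<bar>e * E t * lp t \<xi>1 (Q t + e * DE t) (y e t)\<bar> \<le> \<bar>e\<bar> * B * CL"
      unfolding abs_mult using bl(1)[OF t xi(1,4,5)] bP(3)[OF t]
      by (intro mult_mono mult_left_mono) auto
    have 2: "\<bar>e * DE t * lq t (P t) \<xi>2 (y e t)\<bar> \<le> \<bar>e\<bar> * B * CL"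
      unfolding abs_mult using bl(2)[OF t RP(1) xi(2,5)] bP(4)[OF t]
      by (intro mult_mono mult_left_mono) auto
    have 3: "\<bar>(y e t - y0 t) * lz t (P t) (Q t) \<xi>3\<bar> \<le> \<bar>y e t - y0 t\<bar> * CL"
      unfolding abs_mult using bl(3)[OF t RP xi(3)]
      by (intro mult_left_mono) auto
    show ?thesis unfolding xi(6) using 1 2 3 by (simp add: algebra_simps)
  qed
  have gr: "\<bar>y e s - y0 s\<bar> \<le> A * \<bar>e\<bar>"
    if e1: "\<bar>e\<bar> \<le> 1" and T: "T \<in> {a..b}" and small: "\<forall>s\<in>{a..T}. \<bar>y e s - y0 s\<bar> \<le> 1"
      and s: "s \<in> {a..T}" for e T s
  proof -
    define D where "D t = y e t - y0 t" for t
    have TS: "{a..T} \<subseteq> {a..b}" using T by auto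
    have cD: "continuous_on {a..b} (\<lambda>t. \<bar>D t\<bar>)" unfolding D_def y0_def by (intro continuous_intros cy)
    have Da: "D a = 0" unfolding D_def y0_def using ya by simp
    have key: "\<bar>D s'\<bar> \<le> CL*(2*B)*\<bar>e\<bar>*(T-a) + CL * integral {a..s'} (\<lambda>t. \<bar>D t\<bar>)" if s': "s' \<in> {a..T}" for s'
    proof -
      have ftc: "((\<lambda>t. F e t - F 0 t) has_integral (D s' - D a)) {a..s'}"
      proof (rule fundamental_theorem_of_calculus)
        show "a \<le> s'" using s' by auto
        fix t assume t: "t \<in> {a..s'}"
        then have tb: "t \<in> {a..b}" using s' T by auto
        show "(D has_vector_derivative F e t - F 0 t) (at t within {a..s'})"
          using Fd[OF tb, of e] unfolding D_def has_real_derivative_iff_has_vector_derivative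
          by (rule has_vector_derivative_within_subset) (use s' T in auto)
      qed
      have int2: "(\<lambda>t. CL*(2*B)*\<bar>e\<bar> + CL*\<bar>D t\<bar>) integrable_on {a..s'}"
        using s' T by (intro integrable_continuous_real continuous_intros continuous_on_subset[OF cD]) auto
      have "\<bar>D s'\<bar> = norm (integral {a..s'} (\<lambda>t. F e t - F 0 t))"
        using ftc Da by (simp add: integral_unique)
      also have "\<dots> \<le> integral {a..s'} (\<lambda>t. CL*(2*B)*\<bar>e\<bar> + CL*\<bar>D t\<bar>)"
      proof (rule integral_norm_bound_integral[OF has_integral_integrable[OF ftc] int2])
        fix t assume t: "t \<in> {a..s'}"
        then have tb: "t \<in> {a..b}" using s' T by auto
        have "\<bar>D t\<bar> \<le> 1" using small t s' unfolding D_def by auto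
        then show "norm (F e t - F 0 t) \<le> CL*(2*B)*\<bar>e\<bar> + CL*\<bar>D t\<bar>"
          using Fbound[OF tb e1] unfolding D_def by simp
      qed
      also have "\<dots> = CL*(2*B)*\<bar>e\<bar>*(s'-a) + CL * integral {a..s'} (\<lambda>t. \<bar>D t\<bar>)"
        using s' T int2 
        by (subst integral_add) (auto intro!: integrable_continuous_real continuous_intros continuous_on_subset[OF cD])
      also have "\<dots> \<le> CL*(2*B)*\<bar>e\<bar>*(T-a) + CL * integral {a..s'} (\<lambda>t. \<bar>D t\<bar>)"
        using s' CL0 B0 by (auto intro!: mult_left_mono)
      finally show ?thesis .
    qed
    have g: "\<bar>D s\<bar> \<le> CL*(2*B)*\<bar>e\<bar>*(T-a) * exp (CL*(s-a))"
      by (rule gronwall[of a T "\<lambda>t. \<bar>D t\<bar>" CL]) (use continuous_on_subset[OF cD TS] CL0 key s in auto)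
    have "(T-a)*exp (CL*(s-a)) \<le> (b-a)*exp (CL*(b-a))"
      using T s CL0 by (intro mult_mono) (auto intro: mult_left_mono)
    then have m: "CL*(2*B)*\<bar>e\<bar>*((T-a)*exp (CL*(s-a))) \<le> CL*(2*B)*\<bar>e\<bar>*((b-a)*exp (CL*(b-a)))"
      using CL0 B0 by (intro mult_left_mono) auto
    have "\<bar>D s\<bar> \<le> CL*(2*B)*\<bar>e\<bar>*((T-a)*exp (CL*(s-a)))" using g by (simp only: mult.assoc)
    also note m
    also have "CL*(2*B)*\<bar>e\<bar>*((b-a)*exp (CL*(b-a))) = A * \<bar>e\<bar>" unfolding A_def by (simp only: ac_simps)
    finally show ?thesis unfolding D_def .
  qed
  have glob: "\<bar>y e t - y0 t\<bar> \<le> A * \<bar>e\<bar>" if e1: "\<bar>e\<bar> \<le> 1" and eA: "A * \<bar>e\<bar> < 1" and t: "t \<in> {a..b}" for e t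
  proof (rule ccontr)
    assume neg: "\<not> ?thesis"
    define D where "D t = \<bar>y e t - y0 t\<bar>" for t
    have cD: "continuous_on {a..b} D" unfolding D_def y0_def by (intro continuous_intros cy)
    have Da: "D a = 0" unfolding D_def y0_def using ya by simp
    define S where "S = {t\<in>{a..b}. 1 \<le> D t}"
    have Ssub: "S \<subseteq> {a..b}" unfolding S_def by auto
    have Sne: "S \<noteq> {}"
    proof
      assume "S = {}"
      then have "\<forall>s\<in>{a..b}. \<bar>y e s - y0 s\<bar> \<le> 1" unfolding S_def D_def by force
      from gr[OF e1 _ this t] neg ab show False by auto
    qed
    have clS: "closed S" unfolding S_def
      by (rule continuous_on_closed_Collect_le) (auto intro: continuous_intros cD)
    define t1 where "t1 = Inf S"
    have bdd: "bdd_below S" using Ssub by (meson bdd_below_Icc bdd_below_mono)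
    have t1S: "t1 \<in> S" unfolding t1_def using closed_contains_Inf[OF Sne bdd clS] .
    have t1ab: "t1 \<in> {a..b}" using t1S Ssub by auto
    have t1a: "a < t1" using t1S Da unfolding S_def by (cases "t1 = a") auto
    have below: "D s < 1" if "s \<in> {a..<t1}" for s
    proof -
      have "s \<notin> S" using that cInf_lower[OF _ bdd, of s] unfolding t1_def by force
      then show ?thesis using that t1ab unfolding S_def by auto
    qed
    have clS2: "closed {s\<in>{a..t1}. D s \<le> 1}"
      by (rule continuous_on_closed_Collect_le) (use t1ab in \<open>auto intro: continuous_intros continuous_on_subset[OF cD]\<close>)
    have "{a..<t1} \<subseteq> {s\<in>{a..t1}. D s \<le> 1}" using below by fastforce
    then have "closure {a..<t1} \<subseteq> {s\<in>{a..t1}. D s \<le> 1}" using clS2 closure_minimal by blast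
    then have all: "\<forall>s\<in>{a..t1}. \<bar>y e s - y0 s\<bar> \<le> 1" using t1a unfolding D_def by auto
    have "\<bar>y e t1 - y0 t1\<bar> \<le> A * \<bar>e\<bar>" using gr[OF e1 t1ab all] t1ab by auto
    then show False using t1S eA unfolding S_def D_def by auto
  qed
  have ucp: "uniformly_continuous_on K (\<lambda>(t,p,q,z). lp t p q z)"
    using compact_uniformly_continuous[OF continuous_on_subset[OF cp KU] cK] .
  have ucq: "uniformly_continuous_on K (\<lambda>(t,p,q,z). lq t p q z)"
    using compact_uniformly_continuous[OF continuous_on_subset[OF cq KU] cK] .
  have ucz: "uniformly_continuous_on K (\<lambda>(t,p,q,z). lz t p q z)"
    using compact_uniformly_continuous[OF continuous_on_subset[OF cz KU] cK] .
  define W where "W = (b-a)*Mmu*(2*B+A) + 1"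
  have W0: "W > 0" unfolding W_def using ab Mmu(1) B0 Anonneg by (simp add: add_nonneg_pos)
  have conv: "\<exists>s>0. \<forall>e::real. e \<noteq> 0 \<and> norm (e - 0) < s \<longrightarrow> norm ((y e b - y 0 b) / (e - 0) - integral {a..b} Tg / mu b) < r"
    if r: "r > 0" for r
  proof -
    define \<epsilon>0 where "\<epsilon>0 = r * mu b / W"
    have \<epsilon>0pos: "\<epsilon>0 > 0" unfolding \<epsilon>0_def using r mupos[of b] W0 by simp
    obtain d1 where d1: "d1 > 0" "\<forall>x\<in>K. \<forall>x'\<in>K. dist x' x < d1 \<longrightarrow>
        dist ((\<lambda>(t,p,q,z). lp t p q z) x') ((\<lambda>(t,p,q,z). lp t p q z) x) < \<epsilon>0"
      using ucp \<epsilon>0pos unfolding uniformly_continuous_on_def by metis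
    obtain d2 where d2: "d2 > 0" "\<forall>x\<in>K. \<forall>x'\<in>K. dist x' x < d2 \<longrightarrow>
        dist ((\<lambda>(t,p,q,z). lq t p q z) x') ((\<lambda>(t,p,q,z). lq t p q z) x) < \<epsilon>0"
      using ucq \<epsilon>0pos unfolding uniformly_continuous_on_def by metis
    obtain d3 where d3: "d3 > 0" "\<forall>x\<in>K. \<forall>x'\<in>K. dist x' x < d3 \<longrightarrow>
        dist ((\<lambda>(t,p,q,z). lz t p q z) x') ((\<lambda>(t,p,q,z). lz t p q z) x) < \<epsilon>0"
      using ucz \<epsilon>0pos unfolding uniformly_continuous_on_def by metis
    define d where "d = min d1 (min d2 d3)"
    have d0: "d > 0" unfolding d_def using d1 d2 d3 by auto
    define s where "s = min (min 1 (1/(A+1))) (d / (2*B+A+1))"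
    have s0: "s > 0" unfolding s_def using d0 Anonneg B0 by auto
    show ?thesis
    proof (intro exI[of _ s] conjI allI impI s0)
      fix e :: real assume e: "e \<noteq> 0 \<and> norm (e - 0) < s"
      have e1: "\<bar>e\<bar> \<le> 1" using e unfolding s_def by auto
      have "\<bar>e\<bar> < 1/(A+1)" using e unfolding s_def by auto
      then have "(A+1) * \<bar>e\<bar> < 1" using Anonneg by (simp add: field_simps)
      then have eA: "A * \<bar>e\<bar> < 1" by (simp add: algebra_simps)
      have "\<bar>e\<bar> < d / (2*B+A+1)" using e unfolding s_def by auto
      then have "(2*B+A+1) * \<bar>e\<bar> < d" using Anonneg B0 by (simp add: field_simps)
      then have ed: "(2*B+A) * \<bar>e\<bar> < d" by (simp add: algebra_simps)
      define \<Delta> where "\<Delta> t = (y e t - y0 t) / e" for t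
      define G' where "G' t = - A0 t * mu t * \<Delta> t + mu t * ((F e t - F 0 t) / e)" for t
      have dG: "((\<lambda>t. mu t * \<Delta> t) has_vector_derivative G' t) (at t within {a..b})" if t: "t \<in> {a..b}" for t
      proof -
        have "(\<Delta> has_real_derivative (F e t - F 0 t)/e) (at t within {a..b})"
          unfolding \<Delta>_def using Fd[OF t, of e] by (intro DERIV_cdivide)
        from DERIV_mult[OF dmu[OF t] this] show ?thesis
          unfolding has_real_derivative_iff_has_vector_derivative[symmetric] G'_def
          by (simp add: algebra_simps)
      qed
      have ftc: "(G' has_integral (mu b * \<Delta> b - mu a * \<Delta> a)) {a..b}"
        using ab by (intro fundamental_theorem_of_calculus dG) auto
      have \<Delta>a: "\<Delta> a = 0" unfolding \<Delta>_def y0_def using ya by simp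
      define c where "c = Mmu * (\<epsilon>0 * (2*B + A))"
      have pw: "norm (G' t - Tg t) \<le> c" if t: "t \<in> {a..b}" for t
      proof -
        have ye: "\<bar>y e t - y0 t\<bar> \<le> A*\<bar>e\<bar>" using glob[OF e1 eA t] .
        then have ye1: "\<bar>y e t - y0 t\<bar> \<le> 1" using eA by linarith
        obtain \<xi>1 \<xi>2 \<xi>3 where xi: "\<bar>\<xi>1 - P t\<bar> \<le> \<bar>e\<bar> * B" "\<bar>\<xi>1\<bar> \<le> R" "\<bar>\<xi>2 - Q t\<bar> \<le> \<bar>e\<bar> * B" "\<bar>\<xi>2\<bar> \<le> R"
          "\<bar>\<xi>3 - y0 t\<bar> \<le> \<bar>y e t - y0 t\<bar>" "\<bar>\<xi>3\<bar> \<le> R" "\<bar>Q t + e * DE t\<bar> \<le> R" "\<bar>y e t\<bar> \<le> R"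
          "F e t - F 0 t = e * E t * lp t \<xi>1 (Q t + e * DE t) (y e t) + e * DE t * lq t (P t) \<xi>2 (y e t)
         + (y e t - y0 t) * lz t (P t) (Q t) \<xi>3"
          using split[OF t e1 ye1] by blast
        have RP: "\<bar>P t\<bar> \<le> R" "\<bar>Q t\<bar> \<le> R" "\<bar>y0 t\<bar> \<le> R" using bP[OF t] B0 unfolding R_def by auto
        have x0: "(t, P t, Q t, y0 t) \<in> K" using inK[OF t RP] .
        have x1: "(t, \<xi>1, Q t + e * DE t, y e t) \<in> K" using inK[OF t xi(2,7,8)] .
        have x2: "(t, P t, \<xi>2, y e t) \<in> K" using inK[OF t RP(1) xi(4,8)] .
        have x3: "(t, P t, Q t, \<xi>3) \<in> K" using inK[OF t RP(1,2) xi(6)] .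
        have eDE: "\<bar>e * DE t\<bar> \<le> \<bar>e\<bar> * B" using bP(4)[OF t] by (auto simp: abs_mult intro: mult_left_mono)
        have "dist (t, \<xi>1, Q t + e * DE t, y e t) (t, P t, Q t, y0 t) \<le> \<bar>\<xi>1 - P t\<bar> + \<bar>Q t + e * DE t - Q t\<bar> + \<bar>y e t - y0 t\<bar>"
          by (rule dist4_le)
        also have "\<dots> \<le> (2*B+A) * \<bar>e\<bar>" using xi(1) eDE ye by (simp add: algebra_simps)
        finally have "dist (t, \<xi>1, Q t + e * DE t, y e t) (t, P t, Q t, y0 t) < d1" using ed unfolding d_def by linarith
        then have l1: "\<bar>lp t \<xi>1 (Q t + e * DE t) (y e t) - lp t (P t) (Q t) (y0 t)\<bar> < \<epsilon>0"
          using d1(2) x0 x1 by (force simp: dist_real_def)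
        have "dist (t, P t, \<xi>2, y e t) (t, P t, Q t, y0 t) \<le> \<bar>P t - P t\<bar> + \<bar>\<xi>2 - Q t\<bar> + \<bar>y e t - y0 t\<bar>"
          by (rule dist4_le)
        also have "\<dots> \<le> (2*B+A) * \<bar>e\<bar>" using xi(3) ye B0 by (simp add: algebra_simps)
        finally have "dist (t, P t, \<xi>2, y e t) (t, P t, Q t, y0 t) < d2" using ed unfolding d_def by linarith
        then have l2: "\<bar>lq t (P t) \<xi>2 (y e t) - lq t (P t) (Q t) (y0 t)\<bar> < \<epsilon>0"
          using d2(2) x0 x2 by (force simp: dist_real_def)
        have "dist (t, P t, Q t, \<xi>3) (t, P t, Q t, y0 t) \<le> \<bar>P t - P t\<bar> + \<bar>Q t - Q t\<bar> + \<bar>\<xi>3 - y0 t\<bar>"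
          by (rule dist4_le)
        also have "\<dots> \<le> (2*B+A) * \<bar>e\<bar>"
        proof -
          have "0 \<le> (2*B) * \<bar>e\<bar>" using B0 by simp
          then show ?thesis using xi(5) ye distrib_right[of "2*B" A "\<bar>e\<bar>"] by simp
        qed
        finally have "dist (t, P t, Q t, \<xi>3) (t, P t, Q t, y0 t) < d3" using ed unfolding d_def by linarith
        then have l3: "\<bar>lz t (P t) (Q t) \<xi>3 - A0 t\<bar> < \<epsilon>0"
          using d3(2) x0 x3 unfolding A0_def by (force simp: dist_real_def)
        have De: "\<bar>\<Delta> t\<bar> \<le> A" unfolding \<Delta>_def using ye e by (simp add: abs_divide divide_le_eq)
        have eq: "(F e t - F 0 t) / e = E t * lp t \<xi>1 (Q t + e * DE t) (y e t) + DE t * lq t (P t) \<xi>2 (y e t)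
            + \<Delta> t * lz t (P t) (Q t) \<xi>3"
          unfolding xi(9) \<Delta>_def using e by (simp add: field_simps)
        have "G' t - Tg t = mu t * (E t * (lp t \<xi>1 (Q t + e * DE t) (y e t) - lp t (P t) (Q t) (y0 t))
             + DE t * (lq t (P t) \<xi>2 (y e t) - lq t (P t) (Q t) (y0 t)) + \<Delta> t * (lz t (P t) (Q t) \<xi>3 - A0 t))"
          unfolding G'_def Tg_def eq by (simp add: algebra_simps)
        also have "norm \<dots> \<le> Mmu * (B * \<epsilon>0 + B * \<epsilon>0 + A * \<epsilon>0)"
        proof -
          have "\<bar>E t * (lp t \<xi>1 (Q t + e * DE t) (y e t) - lp t (P t) (Q t) (y0 t))\<bar> \<le> B * \<epsilon>0"
            unfolding abs_mult using bP(3)[OF t] l1 by (intro mult_mono) auto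
          moreover have "\<bar>DE t * (lq t (P t) \<xi>2 (y e t) - lq t (P t) (Q t) (y0 t))\<bar> \<le> B * \<epsilon>0"
            unfolding abs_mult using bP(4)[OF t] l2 by (intro mult_mono) auto
          moreover have "\<bar>\<Delta> t * (lz t (P t) (Q t) \<xi>3 - A0 t)\<bar> \<le> A * \<epsilon>0"
            unfolding abs_mult using De l3 by (intro mult_mono) auto
          ultimately have s3: "\<bar>E t * (lp t \<xi>1 (Q t + e * DE t) (y e t) - lp t (P t) (Q t) (y0 t))
             + DE t * (lq t (P t) \<xi>2 (y e t) - lq t (P t) (Q t) (y0 t)) + \<Delta> t * (lz t (P t) (Q t) \<xi>3 - A0 t)\<bar>
             \<le> B * \<epsilon>0 + B * \<epsilon>0 + A * \<epsilon>0" by linarith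
          show ?thesis unfolding real_norm_def abs_mult
            by (rule mult_mono) (use Mmu t s3 in auto)
        qed
        also have "\<dots> = c" unfolding c_def by (simp add: algebra_simps)
        finally show ?thesis .
      qed
      have Tgi: "Tg integrable_on {a..b}" using cTg integrable_continuous_real by blast
      have "norm (integral {a..b} (\<lambda>t. G' t - Tg t)) \<le> integral {a..b} (\<lambda>t. c)"
        by (rule integral_norm_bound_integral) (use has_integral_integrable[OF ftc] Tgi pw in \<open>auto intro: integrable_diff\<close>)
      moreover have "integral {a..b} (\<lambda>t. G' t - Tg t) = mu b * \<Delta> b - integral {a..b} Tg"
        using integral_diff[OF has_integral_integrable[OF ftc] Tgi] integral_unique[OF ftc] \<Delta>a by simp
      moreover have "integral {a..b} (\<lambda>t. c) = (b-a) * c" using ab by simp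
      ultimately have bnd: "\<bar>mu b * \<Delta> b - integral {a..b} Tg\<bar> \<le> (b-a) * c" using ab by simp
      have "(b-a) * c = \<epsilon>0 * (W - 1)" unfolding c_def W_def by (simp add: algebra_simps)
      also have "\<dots> < \<epsilon>0 * W" using \<epsilon>0pos by simp
      also have "\<dots> = r * mu b" unfolding \<epsilon>0_def using W0 by simp
      finally have "\<bar>mu b * \<Delta> b - integral {a..b} Tg\<bar> < r * mu b" using bnd by linarith
      then have "\<bar>\<Delta> b - integral {a..b} Tg / mu b\<bar> < r"
        using mupos[of b] by (simp add: field_simps abs_divide pos_divide_less_eq)
      then show "norm ((y e b - y 0 b) / (e - 0) - integral {a..b} Tg / mu b) < r"
        unfolding \<Delta>_def y0_def by simp
    qed
  qed
  have lim: "((\<lambda>e. (y e b - y 0 b) / (e - 0)) \<longlongrightarrow> integral {a..b} Tg / mu b) (at 0)"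
    unfolding LIM_eq using conv by blast
  have "((\<lambda>e. y e b) has_real_derivative integral {a..b} Tg / mu b) (at 0)"
    using lim by (simp add: has_field_derivative_iff)
  moreover have "integral {a..b} Tg / mu b = integral {a..b} (\<lambda>t. exp (- integral {a..t} (\<lambda>\<tau>. lz \<tau> (P \<tau>) (Q \<tau>) (y 0 \<tau>)))
          * (lp t (P t) (Q t) (y 0 t) * E t + lq t (P t) (Q t) (y 0 t) * DE t))
        / exp (- integral {a..b} (\<lambda>\<tau>. lz \<tau> (P \<tau>) (Q \<tau>) (y 0 \<tau>)))"
    unfolding Tg_def mu_def A0_def y0_def by simp
  ultimately show ?thesis by simp
qed


lemma kernL_has_integral:
  fixes a t \<beta> :: real
  assumes "a \<le> t" "0 < \<beta>"
  shows "((\<lambda>\<tau>. (t-\<tau>) powr (\<beta>-1)) has_integral (t-a) powr \<beta> / \<beta>) {a..t}"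
proof -
  have "continuous_on {a..t} (\<lambda>\<tau>. (t-\<tau>) powr \<beta>)"
    by (rule continuous_on_powr') (use assms in \<open>auto intro: continuous_intros\<close>)
  then have cont: "continuous_on {a..t} (\<lambda>\<tau>. - ((t-\<tau>) powr \<beta> / \<beta>))"
    using assms by (intro continuous_on_minus continuous_on_divide) auto
  have der: "((\<lambda>\<tau>. - ((t-\<tau>) powr \<beta> / \<beta>)) has_vector_derivative (t-x) powr (\<beta>-1)) (at x)"
    if x: "x \<in> {a<..<t}" for x
  proof -
    have d1: "((\<lambda>z. z powr \<beta>) has_real_derivative \<beta> * (t-x) powr (\<beta>-1)) (at (t-x))"
      by (rule has_real_derivative_powr) (use x in auto)
    have d2: "((\<lambda>\<tau>. t - \<tau>) has_real_derivative -1) (at x)" by (auto intro!: derivative_eq_intros)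
    have "((\<lambda>\<tau>. - ((t-\<tau>) powr \<beta> / \<beta>)) has_real_derivative - (\<beta> * (t-x) powr (\<beta>-1) * -1 / \<beta>)) (at x)"
      by (intro DERIV_minus DERIV_cdivide DERIV_chain2[OF d1 d2])
    then show ?thesis
      using assms by (simp add: has_real_derivative_iff_has_vector_derivative)
  qed
  show ?thesis
    using fundamental_theorem_of_calculus_interior[of a t "\<lambda>\<tau>. - ((t-\<tau>) powr \<beta> / \<beta>)"
        "\<lambda>\<tau>. (t-\<tau>) powr (\<beta>-1)", OF assms(1) cont der] assms by simp
qed

lemma kernR_has_integral:
  fixes b \<tau> \<beta> :: real
  assumes "\<tau> \<le> b" "0 < \<beta>"
  shows "((\<lambda>s. (s-\<tau>) powr (\<beta>-1)) has_integral (b-\<tau>) powr \<beta> / \<beta>) {\<tau>..b}"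
proof -
  have "continuous_on {\<tau>..b} (\<lambda>s. (s-\<tau>) powr \<beta>)"
    by (rule continuous_on_powr') (use assms in \<open>auto intro: continuous_intros\<close>)
  then have cont: "continuous_on {\<tau>..b} (\<lambda>s. (s-\<tau>) powr \<beta> / \<beta>)"
    using assms by (intro continuous_on_divide) auto
  have der: "((\<lambda>s. (s-\<tau>) powr \<beta> / \<beta>) has_vector_derivative (x-\<tau>) powr (\<beta>-1)) (at x)"
    if x: "x \<in> {\<tau><..<b}" for x
  proof -
    have d1: "((\<lambda>z. z powr \<beta>) has_real_derivative \<beta> * (x-\<tau>) powr (\<beta>-1)) (at (x-\<tau>))"
      by (rule has_real_derivative_powr) (use x in auto)
    have d2: "((\<lambda>s. s - \<tau>) has_real_derivative 1) (at x)" by (auto intro!: derivative_eq_intros)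
    have "((\<lambda>s. (s-\<tau>) powr \<beta> / \<beta>) has_real_derivative (\<beta> * (x-\<tau>) powr (\<beta>-1) * 1 / \<beta>)) (at x)"
      by (intro DERIV_cdivide DERIV_chain2[OF d1 d2])
    then show ?thesis
      using assms by (simp add: has_real_derivative_iff_has_vector_derivative)
  qed
  show ?thesis
    using fundamental_theorem_of_calculus_interior[of \<tau> b "\<lambda>s. (s-\<tau>) powr \<beta> / \<beta>"
        "\<lambda>s. (s-\<tau>) powr (\<beta>-1)", OF assms(1) cont der] assms by simp
qed

lemma hl_set_integrable:
  fixes k w :: "real \<Rightarrow> real"
  assumes k: "k integrable_on {c..d}" "\<And>x. x \<in> {c..d} \<Longrightarrow> 0 \<le> k x" "k \<in> borel_measurable borel"
    and w: "continuous_on {c..d} w"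
  shows "set_integrable lborel {c..d} (\<lambda>x. k x * w x)"
    "(LINT x:{c..d}|lborel. k x * w x) = integral {c..d} (\<lambda>x. k x * w x)"
proof -
  have ka: "k absolutely_integrable_on {c..d}"
    using k by (intro absolutely_integrable_integrable_bound[where g=k]) auto
  have "(\<lambda>x. w x * k x) absolutely_integrable_on {c..d}"
  proof (rule absolutely_integrable_bounded_measurable_product_real)
    show "w \<in> borel_measurable (lebesgue_on {c..d})"
      using w by (intro continuous_imp_measurable_on_sets_lebesgue) auto
    show "bounded (w ` {c..d})" using w by (intro compact_imp_bounded compact_continuous_image) auto
  qed (use ka in auto)
  then have ab: "set_integrable lebesgue {c..d} (\<lambda>x. k x * w x)" by (simp add: mult.commute)
  have mw: "(\<lambda>x. indicator {c..d} x *\<^sub>R w x) \<in> borel_measurable borel"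
    by (rule borel_measurable_continuous_on_indicator) (auto intro: w)
  have eq: "(\<lambda>x. indicator {c..d} x *\<^sub>R (k x * w x)) = (\<lambda>x. k x * (indicator {c..d} x *\<^sub>R w x))"
    by (auto simp: indicator_def)
  have meas: "(\<lambda>x. indicator {c..d} x *\<^sub>R (k x * w x)) \<in> borel_measurable lborel"
    unfolding eq using mw k(3) by measurable
  show si: "set_integrable lborel {c..d} (\<lambda>x. k x * w x)"
    using ab meas unfolding set_integrable_def by (simp add: integrable_completion)
  show "(LINT x:{c..d}|lborel. k x * w x) = integral {c..d} (\<lambda>x. k x * w x)"
    using set_borel_integral_eq_integral(2)[OF si] .
qed

definition tri_ker :: "real \<Rightarrow> real \<Rightarrow> real \<Rightarrow> real \<Rightarrow> real \<Rightarrow> real" where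
  "tri_ker a b \<beta> t \<tau> = (if a \<le> \<tau> \<and> \<tau> \<le> t \<and> t \<le> b then (t-\<tau>) powr (\<beta>-1) else 0)"

definition FF :: "real \<Rightarrow> real \<Rightarrow> real \<Rightarrow> (real \<Rightarrow> real) \<Rightarrow> (real \<Rightarrow> real) \<Rightarrow> real \<times> real \<Rightarrow> real" where
  "FF a b \<beta> w1 w2 = (\<lambda>(t,\<tau>). tri_ker a b \<beta> t \<tau> * (indicator {a..b} \<tau> *\<^sub>R w1 \<tau>) * (indicator {a..b} t *\<^sub>R w2 t))"

lemma FF_meas:
  assumes "continuous_on {a..b} w1" "continuous_on {a..b} w2"
  shows "FF a b \<beta> w1 w2 \<in> borel_measurable (lborel \<Otimes>\<^sub>M lborel)"
proof -
  have m1[measurable]: "(\<lambda>x. indicator {a..b} x *\<^sub>R w1 x) \<in> borel_measurable borel"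
    by (rule borel_measurable_continuous_on_indicator) (auto intro: assms)
  have m2[measurable]: "(\<lambda>x. indicator {a..b} x *\<^sub>R w2 x) \<in> borel_measurable borel"
    by (rule borel_measurable_continuous_on_indicator) (auto intro: assms)
  have mk[measurable]: "(\<lambda>(t,\<tau>). tri_ker a b \<beta> t \<tau>) \<in> borel_measurable (lborel \<Otimes>\<^sub>M lborel)"
    unfolding tri_ker_def by measurable
  show ?thesis unfolding FF_def by measurable
qed

lemma kerL_facts:
  fixes a t \<beta> :: real
  assumes "a \<le> t" "0 < \<beta>" "continuous_on {a..t} w"
  shows "set_integrable lborel {a..t} (\<lambda>\<tau>. (t-\<tau>) powr (\<beta>-1) * w \<tau>)"
    "(LINT \<tau>:{a..t}|lborel. (t-\<tau>) powr (\<beta>-1) * w \<tau>) = integral {a..t} (\<lambda>\<tau>. (t-\<tau>) powr (\<beta>-1) * w \<tau>)"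
  using hl_set_integrable[of "\<lambda>\<tau>. (t-\<tau>) powr (\<beta>-1)" a t w] kernL_has_integral[OF assms(1,2)] assms(3)
  by (auto simp: has_integral_integrable)

lemma kerR_facts:
  fixes b \<tau> \<beta> :: real
  assumes "\<tau> \<le> b" "0 < \<beta>" "continuous_on {\<tau>..b} w"
  shows "set_integrable lborel {\<tau>..b} (\<lambda>t. (t-\<tau>) powr (\<beta>-1) * w t)"
    "(LINT t:{\<tau>..b}|lborel. (t-\<tau>) powr (\<beta>-1) * w t) = integral {\<tau>..b} (\<lambda>t. (t-\<tau>) powr (\<beta>-1) * w t)"
  using hl_set_integrable[of "\<lambda>t. (t-\<tau>) powr (\<beta>-1)" \<tau> b w] kernR_has_integral[OF assms(1,2)] assms(3)
  by (auto simp: has_integral_integrable)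

lemma FF_fst:
  assumes ab: "a \<le> b" and \<beta>: "0 < \<beta>" and w1: "continuous_on {a..b} w1" and w2: "continuous_on {a..b} w2"
  shows "integrable lborel (\<lambda>\<tau>. FF a b \<beta> w1 w2 (t,\<tau>))"
    "(LINT \<tau>|lborel. FF a b \<beta> w1 w2 (t,\<tau>)) = indicator {a..b} t * (w2 t * integral {a..t} (\<lambda>\<tau>. (t-\<tau>) powr (\<beta>-1) * w1 \<tau>))"
proof -
  have "integrable lborel (\<lambda>\<tau>. FF a b \<beta> w1 w2 (t,\<tau>)) \<and>
    (LINT \<tau>|lborel. FF a b \<beta> w1 w2 (t,\<tau>)) = indicator {a..b} t * (w2 t * integral {a..t} (\<lambda>\<tau>. (t-\<tau>) powr (\<beta>-1) * w1 \<tau>))"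
  proof (cases "t \<in> {a..b}")
    case True
    have eq: "(\<lambda>\<tau>. FF a b \<beta> w1 w2 (t,\<tau>)) = (\<lambda>\<tau>. w2 t * (indicator {a..t} \<tau> *\<^sub>R ((t-\<tau>) powr (\<beta>-1) * w1 \<tau>)))"
      using True by (auto simp: FF_def tri_ker_def indicator_def fun_eq_iff)
    have c1: "continuous_on {a..t} w1" using True by (auto intro: continuous_on_subset[OF w1])
    note k = kerL_facts[of a t \<beta> w1, OF _ \<beta> c1]
    show ?thesis unfolding eq using True k
      by (auto simp: set_integrable_def set_lebesgue_integral_def)
  next
    case False
    then have eq: "(\<lambda>\<tau>. FF a b \<beta> w1 w2 (t,\<tau>)) = (\<lambda>\<tau>. 0)"
      by (auto simp: FF_def tri_ker_def indicator_def fun_eq_iff)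
    show ?thesis unfolding eq using False by simp
  qed
  then show "integrable lborel (\<lambda>\<tau>. FF a b \<beta> w1 w2 (t,\<tau>))"
    "(LINT \<tau>|lborel. FF a b \<beta> w1 w2 (t,\<tau>)) = indicator {a..b} t * (w2 t * integral {a..t} (\<lambda>\<tau>. (t-\<tau>) powr (\<beta>-1) * w1 \<tau>))"
    by auto
qed

lemma FF_snd:
  assumes ab: "a \<le> b" and \<beta>: "0 < \<beta>" and w1: "continuous_on {a..b} w1" and w2: "continuous_on {a..b} w2"
  shows "integrable lborel (\<lambda>t. FF a b \<beta> w1 w2 (t,\<tau>))"
    "(LINT t|lborel. FF a b \<beta> w1 w2 (t,\<tau>)) = indicator {a..b} \<tau> * (w1 \<tau> * integral {\<tau>..b} (\<lambda>t. (t-\<tau>) powr (\<beta>-1) * w2 t))"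
proof -
  have "integrable lborel (\<lambda>t. FF a b \<beta> w1 w2 (t,\<tau>)) \<and>
    (LINT t|lborel. FF a b \<beta> w1 w2 (t,\<tau>)) = indicator {a..b} \<tau> * (w1 \<tau> * integral {\<tau>..b} (\<lambda>t. (t-\<tau>) powr (\<beta>-1) * w2 t))"
  proof (cases "\<tau> \<in> {a..b}")
    case True
    have eq: "(\<lambda>t. FF a b \<beta> w1 w2 (t,\<tau>)) = (\<lambda>t. w1 \<tau> * (indicator {\<tau>..b} t *\<^sub>R ((t-\<tau>) powr (\<beta>-1) * w2 t)))"
      using True by (auto simp: FF_def tri_ker_def indicator_def fun_eq_iff)
    have c2: "continuous_on {\<tau>..b} w2" using True by (auto intro: continuous_on_subset[OF w2])
    note k = kerR_facts[of \<tau> b \<beta> w2, OF _ \<beta> c2]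
    show ?thesis unfolding eq using True k
      by (auto simp: set_integrable_def set_lebesgue_integral_def)
  next
    case False
    then have eq: "(\<lambda>t. FF a b \<beta> w1 w2 (t,\<tau>)) = (\<lambda>t. 0)"
      by (auto simp: FF_def tri_ker_def indicator_def fun_eq_iff)
    show ?thesis unfolding eq using False by simp
  qed
  then show "integrable lborel (\<lambda>t. FF a b \<beta> w1 w2 (t,\<tau>))"
    "(LINT t|lborel. FF a b \<beta> w1 w2 (t,\<tau>)) = indicator {a..b} \<tau> * (w1 \<tau> * integral {\<tau>..b} (\<lambda>t. (t-\<tau>) powr (\<beta>-1) * w2 t))"
    by auto
qed

lemma FF_abs: "norm (FF a b \<beta> w1 w2 p) = FF a b \<beta> (\<lambda>x. \<bar>w1 x\<bar>) (\<lambda>x. \<bar>w2 x\<bar>) p"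
  by (cases p) (auto simp: FF_def tri_ker_def abs_mult indicator_def)

lemma fubini_tri:
  fixes u v :: "real \<Rightarrow> real"
  assumes ab: "a \<le> b" and \<beta>: "0 < \<beta>" and u: "continuous_on {a..b} u" and v: "continuous_on {a..b} v"
  shows "integral {a..b} (\<lambda>t. v t * integral {a..t} (\<lambda>\<tau>. (t-\<tau>) powr (\<beta>-1) * u \<tau>))
       = integral {a..b} (\<lambda>\<tau>. u \<tau> * integral {\<tau>..b} (\<lambda>t. (t-\<tau>) powr (\<beta>-1) * v t))"
proof -
  let ?F = "FF a b \<beta> u v"
  have au: "continuous_on {a..b} (\<lambda>x. \<bar>u x\<bar>)" and av: "continuous_on {a..b} (\<lambda>x. \<bar>v x\<bar>)"
    using u v by (auto intro: continuous_intros)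
  obtain Cu where Cu: "Cu \<ge> 0" "\<forall>x\<in>{a..b}. \<bar>u x\<bar> \<le> Cu" using bound_on_compact[OF compact_Icc u] by blast
  obtain Cv where Cv: "Cv \<ge> 0" "\<forall>x\<in>{a..b}. \<bar>v x\<bar> \<le> Cv" using bound_on_compact[OF compact_Icc v] by blast
  define C where "C = Cv * (Cu * ((b-a) powr \<beta> / \<beta>))"
  have mF: "?F \<in> borel_measurable (lborel \<Otimes>\<^sub>M lborel)" by (rule FF_meas[OF u v])
  have mFa: "FF a b \<beta> (\<lambda>x. \<bar>u x\<bar>) (\<lambda>x. \<bar>v x\<bar>) \<in> borel_measurable (lborel \<Otimes>\<^sub>M lborel)"
    by (rule FF_meas[OF au av])
  have intF: "integrable (lborel \<Otimes>\<^sub>M lborel) ?F"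
  proof (rule lborel_pair.Fubini_integrable[OF mF])
    show "AE x in lborel. integrable lborel (\<lambda>y. ?F (x, y))"
      using FF_fst(1)[OF ab \<beta> u v] by auto
    have eqn: "(\<lambda>x. LINT y|lborel. norm (?F (x, y))) = (\<lambda>x. LINT y|lborel. FF a b \<beta> (\<lambda>x. \<bar>u x\<bar>) (\<lambda>x. \<bar>v x\<bar>) (x,y))"
      unfolding FF_abs ..
    have meas: "(\<lambda>x. LINT y|lborel. FF a b \<beta> (\<lambda>x. \<bar>u x\<bar>) (\<lambda>x. \<bar>v x\<bar>) (x,y)) \<in> borel_measurable lborel"
      using lborel.borel_measurable_lebesgue_integral[of "\<lambda>x y. FF a b \<beta> (\<lambda>x. \<bar>u x\<bar>) (\<lambda>x. \<bar>v x\<bar>) (x,y)" lborel] mFa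
      by simp
    have bnd: "norm (LINT y|lborel. FF a b \<beta> (\<lambda>x. \<bar>u x\<bar>) (\<lambda>x. \<bar>v x\<bar>) (x,y)) \<le> norm (indicator {a..b} x *\<^sub>R C)" for x
    proof (cases "x \<in> {a..b}")
      case True
      have cu: "continuous_on {a..x} (\<lambda>x. \<bar>u x\<bar>)" using True by (auto intro: continuous_on_subset[OF au])
      have i1: "(\<lambda>\<tau>. (x-\<tau>) powr (\<beta>-1) * \<bar>u \<tau>\<bar>) integrable_on {a..x}"
        using set_borel_integral_eq_integral(1)[OF kerL_facts(1)[of a x \<beta>, OF _ \<beta> cu]] True by auto
      have i2: "(\<lambda>\<tau>. (x-\<tau>) powr (\<beta>-1) * Cu) integrable_on {a..x}"
        using kernL_has_integral[of a x \<beta>] True \<beta> by (auto intro: integrable_on_mult_left has_integral_integrable)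
      have "integral {a..x} (\<lambda>\<tau>. (x-\<tau>) powr (\<beta>-1) * \<bar>u \<tau>\<bar>) \<le> integral {a..x} (\<lambda>\<tau>. (x-\<tau>) powr (\<beta>-1) * Cu)"
        by (rule integral_le[OF i1 i2]) (use Cu True in \<open>auto intro!: mult_left_mono\<close>)
      also have "\<dots> = Cu * ((x-a) powr \<beta> / \<beta>)"
        using integral_unique[OF kernL_has_integral[of a x \<beta>]] True \<beta> by (simp add: mult.commute)
      also have "\<dots> \<le> Cu * ((b-a) powr \<beta> / \<beta>)"
        using True \<beta> Cu by (intro mult_left_mono divide_right_mono powr_mono2) auto
      finally have I: "integral {a..x} (\<lambda>\<tau>. (x-\<tau>) powr (\<beta>-1) * \<bar>u \<tau>\<bar>) \<le> Cu * ((b-a) powr \<beta> / \<beta>)" .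
      have I0: "0 \<le> integral {a..x} (\<lambda>\<tau>. (x-\<tau>) powr (\<beta>-1) * \<bar>u \<tau>\<bar>)"
        by (rule integral_nonneg[OF i1]) auto
      have "\<bar>v x\<bar> * integral {a..x} (\<lambda>\<tau>. (x-\<tau>) powr (\<beta>-1) * \<bar>u \<tau>\<bar>) \<le> Cv * (Cu * ((b-a) powr \<beta> / \<beta>))"
        using Cv True I I0 by (intro mult_mono) auto
      then have "\<bar>v x\<bar> * integral {a..x} (\<lambda>\<tau>. (x-\<tau>) powr (\<beta>-1) * \<bar>u \<tau>\<bar>) \<le> C" unfolding C_def .
      moreover have C0: "0 \<le> C" unfolding C_def using Cu Cv \<beta> by simp
      moreover have "norm (LINT y|lborel. FF a b \<beta> (\<lambda>x. \<bar>u x\<bar>) (\<lambda>x. \<bar>v x\<bar>) (x,y))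
          = \<bar>v x\<bar> * integral {a..x} (\<lambda>\<tau>. (x-\<tau>) powr (\<beta>-1) * \<bar>u \<tau>\<bar>)"
        unfolding FF_fst(2)[OF ab \<beta> au av] using True I0 by simp
      moreover have "norm (indicator {a..b} x *\<^sub>R C) = C" using True C0 by simp
      ultimately show ?thesis using True by simp
    next
      case False
      then show ?thesis unfolding FF_fst(2)[OF ab \<beta> au av] by simp
    qed
    have "integrable lborel (\<lambda>x. indicator {a..b} x *\<^sub>R C)"
      by (intro borel_integrable_compact continuous_intros) auto
    then show "integrable lborel (\<lambda>x. LINT y|lborel. norm (?F (x, y)))"
      unfolding eqn by (rule Bochner_Integration.integrable_bound) (use meas bnd in auto)
  qed
  have fub: "(LINT \<tau>|lborel. LINT t|lborel. ?F (t,\<tau>)) = (LINT t|lborel. LINT \<tau>|lborel. ?F (t,\<tau>))"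
    using lborel_pair.Fubini_integral[of "\<lambda>t \<tau>. ?F (t,\<tau>)"] intF by simp
  have i1: "integrable lborel (\<lambda>t. LINT \<tau>|lborel. ?F (t,\<tau>))"
    using lborel_pair.integrable_fst'[OF intF] by simp
  have i2: "integrable lborel (\<lambda>\<tau>. LINT t|lborel. ?F (t,\<tau>))"
    using lborel_pair.integrable_snd[of "\<lambda>t \<tau>. ?F (t,\<tau>)"] intF by simp
  define \<Phi>1 where "\<Phi>1 t = v t * integral {a..t} (\<lambda>\<tau>. (t-\<tau>) powr (\<beta>-1) * u \<tau>)" for t
  define \<Phi>2 where "\<Phi>2 \<tau> = u \<tau> * integral {\<tau>..b} (\<lambda>t. (t-\<tau>) powr (\<beta>-1) * v t)" for \<tau>
  have e1: "(\<lambda>t. LINT \<tau>|lborel. ?F (t,\<tau>)) = (\<lambda>t. indicator {a..b} t *\<^sub>R \<Phi>1 t)"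
    unfolding \<Phi>1_def FF_fst(2)[OF ab \<beta> u v] by simp
  have e2: "(\<lambda>\<tau>. LINT t|lborel. ?F (t,\<tau>)) = (\<lambda>\<tau>. indicator {a..b} \<tau> *\<^sub>R \<Phi>2 \<tau>)"
    unfolding \<Phi>2_def FF_snd(2)[OF ab \<beta> u v] by simp
  have s1: "set_integrable lborel {a..b} \<Phi>1" using i1 unfolding e1 set_integrable_def .
  have s2: "set_integrable lborel {a..b} \<Phi>2" using i2 unfolding e2 set_integrable_def .
  have "integral {a..b} \<Phi>1 = (LINT t:{a..b}|lborel. \<Phi>1 t)" using set_borel_integral_eq_integral(2)[OF s1] by simp
  also have "\<dots> = (LINT t|lborel. LINT \<tau>|lborel. ?F (t,\<tau>))" unfolding e1 set_lebesgue_integral_def ..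
  also have "\<dots> = (LINT \<tau>|lborel. LINT t|lborel. ?F (t,\<tau>))" using fub by simp
  also have "\<dots> = (LINT \<tau>:{a..b}|lborel. \<Phi>2 \<tau>)" unfolding e2 set_lebesgue_integral_def ..
  also have "\<dots> = integral {a..b} \<Phi>2" using set_borel_integral_eq_integral(2)[OF s2] by simp
  finally show ?thesis unfolding \<Phi>1_def \<Phi>2_def .
qed


lemma vd_within:
  fixes f :: "real \<Rightarrow> real"
  assumes "a < b" "t \<in> {a..b}" "(f has_vector_derivative D) (at t within {a..b})"
  shows "vector_derivative f (at t within {a..b}) = D"
  using vector_derivative_within_cbox[of a b t f D] assms by simp

lemma vd_cong:
  fixes f g :: "real \<Rightarrow> real"
  assumes "t \<in> S" "\<And>s. s \<in> S \<Longrightarrow> f s = g s"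
  shows "vector_derivative f (at t within S) = vector_derivative g (at t within S)"
proof -
  have gf: "g s = f s" if "s \<in> S" for s using assms(2)[OF that] by simp
  have 1: "(g has_vector_derivative D) (at t within S)" if "(f has_vector_derivative D) (at t within S)" for D
    by (rule has_vector_derivative_transform[of t S g f D, OF assms(1) _ that]) (simp add: gf)
  have 2: "(f has_vector_derivative D) (at t within S)" if "(g has_vector_derivative D) (at t within S)" for D
    by (rule has_vector_derivative_transform[of t S f g D, OF assms(1) _ that]) (simp add: assms(2))
  have "(f has_vector_derivative D) (at t within S) \<longleftrightarrow> (g has_vector_derivative D) (at t within S)" for D
    using 1 2 by blast
  then show ?thesis unfolding vector_derivative_def by simp
qed

lemma hderiv_cong:
  assumes "\<And>s. s \<in> S \<Longrightarrow> f s = g s"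
  shows "t \<in> S \<Longrightarrow> hderiv k S f t = hderiv k S g t"
proof (induction k arbitrary: t)
  case 0 then show ?case using assms by simp
next
  case (Suc k)
  have "vector_derivative (hderiv k S f) (at t within S) = vector_derivative (hderiv k S g) (at t within S)"
    by (rule vd_cong[OF Suc.prems Suc.IH])
  then show ?case by (simp only: hderiv.simps)
qed

lemma Cn_on_cong:
  assumes "\<And>s. s \<in> S \<Longrightarrow> f s = g s"
  shows "Cn_on m S f \<longleftrightarrow> Cn_on m S g"
proof -
  have h: "t \<in> S \<Longrightarrow> hderiv k S f t = hderiv k S g t" for k t using hderiv_cong[OF assms] .
  have d: "(hderiv k S f has_vector_derivative hderiv (Suc k) S f t) (at t within S) \<longleftrightarrow>
     (hderiv k S g has_vector_derivative hderiv (Suc k) S g t) (at t within S)" if t: "t \<in> S" for k t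
  proof
    have hs: "hderiv k S g s = hderiv k S f s" if "s \<in> S" for s using h[OF that] by simp
    have hs': "hderiv k S f s = hderiv k S g s" if "s \<in> S" for s using h[OF that] by simp
    assume "(hderiv k S f has_vector_derivative hderiv (Suc k) S f t) (at t within S)"
    from has_vector_derivative_transform[OF t hs this]
    show "(hderiv k S g has_vector_derivative hderiv (Suc k) S g t) (at t within S)"
      unfolding h[OF t, of "Suc k", symmetric] .
  next
    have hs': "hderiv k S f s = hderiv k S g s" if "s \<in> S" for s using h[OF that] by simp
    assume "(hderiv k S g has_vector_derivative hderiv (Suc k) S g t) (at t within S)"
    from has_vector_derivative_transform[OF t hs' this]
    show "(hderiv k S f has_vector_derivative hderiv (Suc k) S f t) (at t within S)"
      unfolding h[OF t, of "Suc k"] .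
  qed
  have c: "continuous_on S (hderiv m S f) \<longleftrightarrow> continuous_on S (hderiv m S g)"
    using h by (intro continuous_on_cong) auto
  show ?thesis
  proof
    assume A: "Cn_on m S f"
    show "Cn_on m S g" unfolding Cn_on_def
    proof (intro conjI allI impI ballI)
      fix k t assume "k < m" "t \<in> S"
      then show "(hderiv k S g has_vector_derivative hderiv (Suc k) S g t) (at t within S)"
        using A d[of t k] unfolding Cn_on_def by blast
    next
      show "continuous_on S (hderiv m S g)" using A c unfolding Cn_on_def by blast
    qed
  next
    assume A: "Cn_on m S g"
    show "Cn_on m S f" unfolding Cn_on_def
    proof (intro conjI allI impI ballI)
      fix k t assume "k < m" "t \<in> S"
      then show "(hderiv k S f has_vector_derivative hderiv (Suc k) S f t) (at t within S)"
        using A d[of t k] unfolding Cn_on_def by blast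
    next
      show "continuous_on S (hderiv m S f)" using A c unfolding Cn_on_def by blast
    qed
  qed
qed

lemma Cn_on_cont:
  assumes "Cn_on m S f" "k \<le> m"
  shows "continuous_on S (hderiv k S f)"
proof (cases "k = m")
  case True then show ?thesis using assms unfolding Cn_on_def by auto
next
  case False
  then have "k < m" using assms by auto
  then have "\<forall>t\<in>S. (hderiv k S f has_vector_derivative hderiv (Suc k) S f t) (at t within S)"
    using assms unfolding Cn_on_def by auto
  then show ?thesis
    using continuous_on_eq_continuous_within has_vector_derivative_continuous by blast
qed

lemma Cn_on_mono:
  assumes "Cn_on m S f" "k \<le> m"
  shows "Cn_on k S f"
  using assms Cn_on_cont[OF assms] unfolding Cn_on_def by auto

lemma hderiv_lin:
  fixes f g :: "real \<Rightarrow> real"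
  assumes ab: "a < b" and f: "Cn_on m {a..b} f" and g: "Cn_on m {a..b} g"
  shows "k \<le> m \<Longrightarrow> t \<in> {a..b} \<Longrightarrow> hderiv k {a..b} (\<lambda>s. f s + c * g s) t = hderiv k {a..b} f t + c * hderiv k {a..b} g t"
proof (induction k arbitrary: t)
  case 0 then show ?case by simp
next
  case (Suc k)
  have km: "k < m" and k_le: "k \<le> m" using Suc.prems(1) by auto
  have t: "t \<in> {a..b}" using Suc.prems(2) .
  have df: "(hderiv k {a..b} f has_vector_derivative hderiv (Suc k) {a..b} f t) (at t within {a..b})"
    using f km t unfolding Cn_on_def by blast
  have dg: "(hderiv k {a..b} g has_vector_derivative hderiv (Suc k) {a..b} g t) (at t within {a..b})"
    using g km t unfolding Cn_on_def by blast
  have d1: "((\<lambda>s. hderiv k {a..b} f s + c * hderiv k {a..b} g s) has_vector_derivative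
      hderiv (Suc k) {a..b} f t + c * hderiv (Suc k) {a..b} g t) (at t within {a..b})"
    by (rule has_vector_derivative_add[OF df has_vector_derivative_mult_right[OF dg]])
  have IH: "hderiv k {a..b} (\<lambda>s. f s + c * g s) s = hderiv k {a..b} f s + c * hderiv k {a..b} g s"
    if "s \<in> {a..b}" for s
    using Suc.IH[OF k_le that] .
  have d2: "(hderiv k {a..b} (\<lambda>s. f s + c * g s) has_vector_derivative
      hderiv (Suc k) {a..b} f t + c * hderiv (Suc k) {a..b} g t) (at t within {a..b})"
    using has_vector_derivative_transform[OF t IH d1] .
  have "vector_derivative (hderiv k {a..b} (\<lambda>s. f s + c * g s)) (at t within {a..b}) =
      hderiv (Suc k) {a..b} f t + c * hderiv (Suc k) {a..b} g t"
    using vd_within[OF ab t d2] .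
  then show ?case by (simp only: hderiv.simps)
qed

lemma Cn_on_lin:
  fixes f g :: "real \<Rightarrow> real"
  assumes ab: "a < b" and f: "Cn_on m {a..b} f" and g: "Cn_on m {a..b} g"
  shows "Cn_on m {a..b} (\<lambda>s. f s + c * g s)"
  unfolding Cn_on_def
proof (intro conjI ballI allI impI)
  fix k t assume k: "k < m" and t: "t \<in> {a..b}"
  have df: "(hderiv k {a..b} f has_vector_derivative hderiv (Suc k) {a..b} f t) (at t within {a..b})"
    using f k t unfolding Cn_on_def by blast
  have dg: "(hderiv k {a..b} g has_vector_derivative hderiv (Suc k) {a..b} g t) (at t within {a..b})"
    using g k t unfolding Cn_on_def by blast
  have d1: "((\<lambda>s. hderiv k {a..b} f s + c * hderiv k {a..b} g s) has_vector_derivative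
      hderiv (Suc k) {a..b} f t + c * hderiv (Suc k) {a..b} g t) (at t within {a..b})"
    by (rule has_vector_derivative_add[OF df has_vector_derivative_mult_right[OF dg]])
  have IH: "hderiv k {a..b} (\<lambda>s. f s + c * g s) s = hderiv k {a..b} f s + c * hderiv k {a..b} g s"
    if "s \<in> {a..b}" for s
    using hderiv_lin[OF ab f g, of k s c] k that by simp
  have d2: "(hderiv k {a..b} (\<lambda>s. f s + c * g s) has_vector_derivative
      hderiv (Suc k) {a..b} f t + c * hderiv (Suc k) {a..b} g t) (at t within {a..b})"
    using has_vector_derivative_transform[OF t IH d1] .
  have eq: "hderiv (Suc k) {a..b} (\<lambda>s. f s + c * g s) t = hderiv (Suc k) {a..b} f t + c * hderiv (Suc k) {a..b} g t"
    using hderiv_lin[OF ab f g, of "Suc k" t c] k t by simp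
  show "(hderiv k {a..b} (\<lambda>s. f s + c * g s) has_vector_derivative
      hderiv (Suc k) {a..b} (\<lambda>s. f s + c * g s) t) (at t within {a..b})"
    unfolding eq by (rule d2)
next
  have cc: "continuous_on {a..b} (\<lambda>t. hderiv m {a..b} f t + c * hderiv m {a..b} g t)"
    using Cn_on_cont[OF f order_refl] Cn_on_cont[OF g order_refl] by (intro continuous_intros)
  have ee: "hderiv m {a..b} (\<lambda>s. f s + c * g s) t = hderiv m {a..b} f t + c * hderiv m {a..b} g t"
    if "t \<in> {a..b}" for t
    using hderiv_lin[OF ab f g, of m t c] that by simp
  show "continuous_on {a..b} (hderiv m {a..b} (\<lambda>s. f s + c * g s))"
    by (rule continuous_on_eq[OF cc]) (rule ee[symmetric])
qed

lemma hderiv_zero: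
  assumes "a < b"
  shows "t \<in> {a..b} \<Longrightarrow> hderiv k {a..b} (\<lambda>_. 0) t = 0"
proof (induction k arbitrary: t)
  case 0 then show ?case by simp
next
  case (Suc k)
  have IH: "hderiv k {a..b} (\<lambda>_. 0) s = (\<lambda>_. 0) s" if "s \<in> {a..b}" for s using Suc.IH[OF that] by simp
  have d: "(hderiv k {a..b} (\<lambda>_. 0) has_vector_derivative 0) (at t within {a..b})"
    using has_vector_derivative_transform[OF Suc.prems IH has_vector_derivative_const] .
  have "vector_derivative (hderiv k {a..b} (\<lambda>_. 0)) (at t within {a..b}) = 0"
    using vd_within[OF assms Suc.prems d] .
  then show ?case by (simp only: hderiv.simps)
qed

lemma Cn_on_zero:
  assumes "a < b"
  shows "Cn_on m {a..b} (\<lambda>_. 0)"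
  unfolding Cn_on_def
proof (intro conjI ballI allI impI)
  fix k t assume "k < m" and t: "t \<in> {a..b}"
  have IH: "hderiv k {a..b} (\<lambda>_. 0) s = (\<lambda>_. 0) s" if "s \<in> {a..b}" for s using hderiv_zero[OF assms that] by simp
  have "(hderiv k {a..b} (\<lambda>_. 0) has_vector_derivative 0) (at t within {a..b})"
    using has_vector_derivative_transform[OF t IH has_vector_derivative_const] .
  then show "(hderiv k {a..b} (\<lambda>_. 0) has_vector_derivative hderiv (Suc k) {a..b} (\<lambda>_. 0) t) (at t within {a..b})"
    using hderiv_zero[OF assms t, of "Suc k"] by simp
next
  show "continuous_on {a..b} (hderiv m {a..b} (\<lambda>_. 0))"
    by (rule continuous_on_eq[OF continuous_on_const]) (rule hderiv_zero[OF assms, symmetric])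
qed


definition pp :: "nat \<Rightarrow> real \<Rightarrow> real \<Rightarrow> real" where "pp N c t = (max (t - c) 0) ^ N"
definition qq :: "real \<Rightarrow> real \<Rightarrow> real \<Rightarrow> real" where "qq g c t = (max (t - c) 0) powr g"

lemma deriv_at_root:
  fixes h :: "real \<Rightarrow> real"
  assumes "isCont h c"
  shows "((\<lambda>t. (t - c) * h t) has_real_derivative h c) (at c)"
proof -
  have ev: "eventually (\<lambda>y. h y = ((y - c) * h y - (c - c) * h c) / (y - c)) (at c)"
    unfolding eventually_at_filter by (rule always_eventually) auto
  have "(h \<longlongrightarrow> h c) (at c)" using assms isCont_def by blast
  then have "((\<lambda>y. ((y - c) * h y - (c - c) * h c) / (y - c)) \<longlongrightarrow> h c) (at c)"
    by (rule Lim_transform_eventually[OF _ ev])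
  then show ?thesis by (simp add: has_field_derivative_iff)
qed

lemma pp_cont: "continuous_on S (pp N c)"
  unfolding pp_def by (intro continuous_intros)

lemma pp_eq: "2 \<le> N \<Longrightarrow> pp N c t = (t - c) * pp (N-1) c t"
  unfolding pp_def by (cases N) (auto simp: max_def)

lemma pp_deriv:
  assumes "2 \<le> N"
  shows "(pp N c has_real_derivative (real N * pp (N-1) c t)) (at t)"
proof -
  consider "t > c" | "t < c" | "t = c" by linarith
  then show ?thesis
  proof cases
    case 1
    have d: "((\<lambda>s. (s - c) ^ N) has_real_derivative real N * (t - c) ^ (N - 1)) (at t)"
      by (auto intro!: derivative_eq_intros)
    have "((\<lambda>s. (s - c) ^ N) has_real_derivative real N * pp (N-1) c t) (at t)"
      using d 1 by (simp add: pp_def)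
    then show ?thesis
      by (rule has_field_derivative_transform_within_open[where S="{c<..}"]) (use 1 in \<open>auto simp: pp_def\<close>)
  next
    case 2
    have "((\<lambda>s. 0) has_real_derivative real N * pp (N-1) c t) (at t)"
      using 2 assms by (simp add: pp_def power_0_left)
    then show ?thesis
      by (rule has_field_derivative_transform_within_open[where S="{..<c}"]) (use 2 assms in \<open>auto simp: pp_def\<close>)
  next
    case 3
    have eq: "pp N c = (\<lambda>t. (t - c) * pp (N-1) c t)" using pp_eq[OF assms] by auto
    have "isCont (pp (N-1) c) c" using pp_cont[of UNIV] continuous_on_eq_continuous_at by blast
    from deriv_at_root[OF this]
    show ?thesis unfolding eq 3 using assms by (simp add: pp_def power_0_left)
  qed
qed

lemma frac_cancel: "(r::real) \<noteq> 0 \<Longrightarrow> F / (r * D) * (r * P) = F / D * P"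
  by (cases "D = 0") (auto simp: field_simps)

lemma hderiv_pp:
  assumes ab: "a < b" and N: "1 \<le> N"
  shows "k \<le> N - 1 \<Longrightarrow> t \<in> {a..b} \<Longrightarrow> hderiv k {a..b} (pp N c) t = (fact N / fact (N - k)) * pp (N - k) c t"
proof (induction k arbitrary: t)
  case 0 then show ?case by simp
next
  case (Suc k)
  have t: "t \<in> {a..b}" using Suc.prems(2) .
  have k: "k \<le> N - 1" "2 \<le> N - k" using Suc.prems(1) by auto
  have IH: "hderiv k {a..b} (pp N c) s = (fact N / fact (N - k)) * pp (N - k) c s" if "s \<in> {a..b}" for s
    using Suc.IH[OF k(1) that] .
  have d0: "(pp (N-k) c has_real_derivative (real (N-k) * pp (N-k-1) c t)) (at t)"
    using pp_deriv[OF k(2)] by simp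
  have d1: "((\<lambda>s. (fact N / fact (N - k)) * pp (N - k) c s) has_vector_derivative
      (fact N / fact (N - k)) * (real (N-k) * pp (N-k-1) c t)) (at t within {a..b})"
    using has_vector_derivative_mult_right[OF d0[unfolded has_real_derivative_iff_has_vector_derivative]]
    by (rule has_vector_derivative_at_within)
  have d2: "(hderiv k {a..b} (pp N c) has_vector_derivative
      (fact N / fact (N - k)) * (real (N-k) * pp (N-k-1) c t)) (at t within {a..b})"
    using has_vector_derivative_transform[OF t IH d1] .
  have v: "vector_derivative (hderiv k {a..b} (pp N c)) (at t within {a..b}) =
      (fact N / fact (N - k)) * (real (N-k) * pp (N-k-1) c t)"
    using vd_within[OF ab t d2] .
  have kN: "k < N" using k by simp
  have f: "fact (N - k) = real (N - k) * fact (N - Suc k)"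
    using fact_reduce[of "N - k"] kN by (simp del: of_nat_diff)
  have "(fact N / fact (N - k)) * (real (N-k) * pp (N-k-1) c t) = (fact N / fact (N - Suc k)) * pp (N - Suc k) c t"
    unfolding f using k by (simp add: field_simps)
  then show ?case using v by (simp only: hderiv.simps)
qed

lemma Cn_pp:
  assumes ab: "a < b" and n: "1 \<le> n"
  shows "Cn_on n {a..b} (pp (n+1) c)"
  unfolding Cn_on_def
proof (intro conjI ballI allI impI)
  fix k t assume k: "k < n" and t: "t \<in> {a..b}"
  have N: "1 \<le> n + 1" by simp
  have IH: "hderiv k {a..b} (pp (n+1) c) s = (fact (n+1) / fact (n+1 - k)) * pp (n+1 - k) c s" if "s \<in> {a..b}" for s
    using hderiv_pp[OF ab N, of k s c] k that by simp
  have k2: "2 \<le> n + 1 - k" using k by simp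
  have d0: "(pp (n+1-k) c has_real_derivative (real (n+1-k) * pp (n+1-k-1) c t)) (at t)"
    using pp_deriv[OF k2] by simp
  have d1: "((\<lambda>s. (fact (n+1) / fact (n+1-k)) * pp (n+1-k) c s) has_vector_derivative
      (fact (n+1) / fact (n+1-k)) * (real (n+1-k) * pp (n+1-k-1) c t)) (at t within {a..b})"
    using has_vector_derivative_mult_right[OF d0[unfolded has_real_derivative_iff_has_vector_derivative]]
    by (rule has_vector_derivative_at_within)
  have d2: "(hderiv k {a..b} (pp (n+1) c) has_vector_derivative
      (fact (n+1) / fact (n+1-k)) * (real (n+1-k) * pp (n+1-k-1) c t)) (at t within {a..b})"
    using has_vector_derivative_transform[OF t IH d1] .
  have f: "fact (n+1 - k) = real (n+1 - k) * fact (n+1 - Suc k)"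
    using fact_reduce[of "n+1 - k"] k by (simp del: of_nat_diff)
  have r0: "real (n+1-k) \<noteq> 0" using k by simp
  have e1: "n+1-k-1 = n+1 - Suc k" by simp
  have alg: "(fact (n+1) / fact (n+1-k)) * (real (n+1-k) * pp (n+1-k-1) c t) = (fact (n+1) / fact (n+1 - Suc k)) * pp (n+1 - Suc k) c t"
    unfolding f e1 by (rule frac_cancel[OF r0])
  have sk: "Suc k \<le> n + 1 - 1" using k by simp
  have e: "(fact (n+1) / fact (n+1-k)) * (real (n+1-k) * pp (n+1-k-1) c t) = hderiv (Suc k) {a..b} (pp (n+1) c) t"
    using alg hderiv_pp[OF ab N sk t, of c] by simp
  show "(hderiv k {a..b} (pp (n+1) c) has_vector_derivative hderiv (Suc k) {a..b} (pp (n+1) c) t) (at t within {a..b})"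
    using d2 unfolding e .
next
  have N: "1 \<le> n + 1" by simp
  have cc: "continuous_on {a..b} (\<lambda>s. (fact (n+1) / fact (n+1 - n)) * pp (n+1 - n) c s)"
    by (intro continuous_intros pp_cont)
  have ee: "(fact (n+1) / fact (n+1 - n)) * pp (n+1 - n) c s = hderiv n {a..b} (pp (n+1) c) s" if "s \<in> {a..b}" for s
    using hderiv_pp[OF ab N, of n s c] that by simp
  show "continuous_on {a..b} (hderiv n {a..b} (pp (n+1) c))"
    by (rule continuous_on_eq[OF cc ee])
qed

lemma hderiv_pp_a:
  assumes ab: "a < b" and ac: "a < c" and N: "1 \<le> N" and j: "j \<le> N - 1"
  shows "hderiv j {a..b} (pp N c) a = 0"
  using hderiv_pp[OF ab N j, of a c] ab ac j N by (simp add: pp_def power_0_left)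

lemma hderiv_pp_b:
  assumes ab: "a < b" and cb: "c < b" and N: "1 \<le> N" and j: "j \<le> N - 1"
  shows "hderiv j {a..b} (pp N c) b = (fact N / fact (N - j)) * (b - c) ^ (N - j)"
  using hderiv_pp[OF ab N j, of b c] ab cb j by (simp add: pp_def)

lemma qq_eq:
  assumes "1 < g"
  shows "qq g c t = (t - c) * qq (g-1) c t"
proof (cases "t > c")
  case True
  have "(t-c) powr g = (t-c) powr (1 + (g-1))" by simp
  also have "\<dots> = (t-c) powr 1 * (t-c) powr (g-1)" by (rule powr_add)
  also have "(t-c) powr 1 = t - c" using True by simp
  finally show ?thesis unfolding qq_def using True by simp
next
  case False
  then show ?thesis unfolding qq_def by (simp add: max_def)
qed

lemma qq_cont:
  assumes "0 < g"
  shows "continuous_on S (qq g c)"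
proof -
  have "continuous_on S (\<lambda>x. max (x - c) 0)" by (intro continuous_intros)
  then show ?thesis unfolding qq_def
    by (rule continuous_on_powr'[OF _ continuous_on_const]) (use assms in auto)
qed

lemma qq_deriv:
  assumes g: "1 < g"
  shows "(qq g c has_real_derivative (g * qq (g-1) c t)) (at t)"
proof -
  consider "t > c" | "t < c" | "t = c" by linarith
  then show ?thesis
  proof cases
    case 1
    have d1: "((\<lambda>z. z powr g) has_real_derivative g * (t-c) powr (g-1)) (at (t-c))"
      by (rule has_real_derivative_powr) (use 1 in auto)
    have d2: "((\<lambda>s. s - c) has_real_derivative 1) (at t)" by (auto intro!: derivative_eq_intros)
    have "((\<lambda>s. (s - c) powr g) has_real_derivative g * qq (g-1) c t) (at t)"
      using DERIV_chain2[OF d1 d2] 1 by (simp add: qq_def)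
    then show ?thesis
      by (rule has_field_derivative_transform_within_open[where S="{c<..}"]) (use 1 in \<open>auto simp: qq_def\<close>)
  next
    case 2
    have "((\<lambda>s. 0) has_real_derivative g * qq (g-1) c t) (at t)"
      using 2 by (simp add: qq_def)
    then show ?thesis
      by (rule has_field_derivative_transform_within_open[where S="{..<c}"]) (use 2 in \<open>auto simp: qq_def\<close>)
  next
    case 3
    have eq: "qq g c = (\<lambda>t. (t - c) * qq (g-1) c t)" using qq_eq[OF g] by auto
    have "isCont (qq (g-1) c) c" using qq_cont[of "g-1" UNIV c] g continuous_on_eq_continuous_at by auto
    from deriv_at_root[OF this]
    show ?thesis unfolding eq 3 by (simp add: qq_def)
  qed
qed

lemma Cn1_qq:
  assumes ab: "a < b" and g: "1 < g"
  shows "Cn_on 1 {a..b} (\<lambda>t. K * qq g c t)"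
proof -
  have d: "((\<lambda>t. K * qq g c t) has_vector_derivative K * (g * qq (g-1) c t)) (at t within {a..b})" for t
    using has_vector_derivative_mult_right[OF qq_deriv[OF g, unfolded has_real_derivative_iff_has_vector_derivative]]
    by (rule has_vector_derivative_at_within)
  have h1: "hderiv 1 {a..b} (\<lambda>t. K * qq g c t) t = K * (g * qq (g-1) c t)" if "t \<in> {a..b}" for t
    using vd_within[OF ab that d] by simp
  show ?thesis unfolding Cn_on_def
  proof (intro conjI ballI allI impI)
    fix k t assume "k < (1::nat)" "t \<in> {a..b}"
    then show "(hderiv k {a..b} (\<lambda>t. K * qq g c t) has_vector_derivative hderiv (Suc k) {a..b} (\<lambda>t. K * qq g c t) t) (at t within {a..b})"
      using d h1 by simp
  next
    have cc: "continuous_on {a..b} (\<lambda>t. K * (g * qq (g-1) c t))"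
      using qq_cont[of "g-1"] g by (intro continuous_intros) auto
    show "continuous_on {a..b} (hderiv 1 {a..b} (\<lambda>t. K * qq g c t))"
      by (rule continuous_on_eq[OF cc]) (rule h1[symmetric])
  qed
qed

lemma beta_piece:
  fixes c t \<beta> :: real and M :: nat
  assumes ct: "c < t" and M: "1 \<le> M" and \<beta>: "0 < \<beta>"
  shows "((\<lambda>\<tau>. (t-\<tau>) powr (\<beta>-1) * (\<tau>-c)^M) has_integral (Beta (real M + 1) \<beta> * (t-c) powr (real M + \<beta>))) {c..t}"
proof -
  define f where "f = (\<lambda>\<tau>. (t-\<tau>) powr (\<beta>-1) * (\<tau>-c)^M)"
  have B: "((\<lambda>u. u powr (real M + 1 - 1) * (1 - u) powr (\<beta> - 1)) has_integral Beta (real M + 1) \<beta>) {0..1}"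
    using has_integral_Beta_real[of "real M + 1" \<beta>] \<beta> by simp
  define K0 where "K0 = (t-c) powr (\<beta>-1) * (t-c)^M"
  have B2: "((\<lambda>u. K0 * (u powr (real M + 1 - 1) * (1 - u) powr (\<beta> - 1))) has_integral K0 * Beta (real M + 1) \<beta>) {0..1}"
    using has_integral_mult_right[OF B] .
  have eq: "K0 * (u powr (real M + 1 - 1) * (1 - u) powr (\<beta> - 1)) = f ((t-c) * u + c)" if u: "u \<in> {0..1}" for u
  proof -
    have um: "u powr (real M + 1 - 1) = u ^ M"
    proof (cases "u = 0")
      case True then show ?thesis using M by (simp add: power_0_left)
    next
      case False then have "u > 0" using u by auto
      then show ?thesis by (simp add: powr_realpow)
    qed
    have "f ((t-c) * u + c) = ((t-c) * (1-u)) powr (\<beta>-1) * ((t-c) * u)^M"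
      unfolding f_def by (simp add: algebra_simps)
    also have "\<dots> = (t-c) powr (\<beta>-1) * (1-u) powr (\<beta>-1) * ((t-c)^M * u^M)"
      by (simp add: powr_mult power_mult_distrib)
    also have "\<dots> = K0 * (u ^ M * (1 - u) powr (\<beta> - 1))" unfolding K0_def by (simp add: ac_simps)
    finally show ?thesis using um by simp
  qed
  have B3: "((\<lambda>u. f ((t-c) * u + c)) has_integral K0 * Beta (real M + 1) \<beta>) {0..1}"
    by (rule has_integral_eq[OF eq B2])
  define I where "I = (t - c) * (K0 * Beta (real M + 1) \<beta>)"
  have tc: "t - c > 0" using ct by simp
  have iff: "((\<lambda>x. f ((t-c) *\<^sub>R x + c)) has_integral (I /\<^sub>R (t-c) ^ DIM(real))) (cbox ((c - c) /\<^sub>R (t-c)) ((t - c) /\<^sub>R (t-c)))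
      \<longleftrightarrow> (f has_integral I) (cbox c t)"
    by (rule has_integral_affinity_iff[OF tc])
  have "I /\<^sub>R (t-c) ^ DIM(real) = K0 * Beta (real M + 1) \<beta>" unfolding I_def using tc by simp
  moreover have "cbox ((c - c) /\<^sub>R (t-c)) ((t - c) /\<^sub>R (t-c)) = {0..1}" using tc by simp
  ultimately have "(f has_integral I) {c..t}" using iff B3 by simp
  moreover have "I = Beta (real M + 1) \<beta> * (t-c) powr (real M + \<beta>)"
  proof -
    have "(t-c) powr (real M + \<beta>) = (t-c) powr (1 + (\<beta>-1) + real M)" by (simp add: algebra_simps)
    also have "\<dots> = (t-c) powr (1 + (\<beta>-1)) * (t-c) powr (real M)" by (rule powr_add)
    also have "(t-c) powr (1 + (\<beta>-1)) = (t-c) powr 1 * (t-c) powr (\<beta>-1)" by (rule powr_add)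
    also have "(t-c) powr 1 = t - c" using tc by (simp add: powr_one)
    also have "(t-c) powr (real M) = (t-c)^M" using tc by (rule powr_realpow)
    finally show ?thesis unfolding I_def K0_def by (simp add: ac_simps)
  qed
  ultimately show ?thesis unfolding f_def by simp
qed

lemma caputo_int_pp:
  fixes a c t \<beta> :: real and M :: nat
  assumes ac: "a \<le> c" and M: "1 \<le> M" and \<beta>: "0 < \<beta>" and at: "a \<le> t"
  shows "((\<lambda>\<tau>. (t-\<tau>) powr (\<beta>-1) * pp M c \<tau>) has_integral (Beta (real M + 1) \<beta> * qq (real M + \<beta>) c t)) {a..t}"
proof (cases "t \<le> c")
  case True
  have "((\<lambda>\<tau>. 0) has_integral 0) {a..t}" by simp
  then have "((\<lambda>\<tau>. (t-\<tau>) powr (\<beta>-1) * pp M c \<tau>) has_integral 0) {a..t}"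
    by (rule has_integral_eq[rotated]) (use True M in \<open>auto simp: pp_def max_def power_0_left\<close>)
  moreover have "qq (real M + \<beta>) c t = 0" unfolding qq_def using True by (simp add: max_def)
  ultimately show ?thesis by simp
next
  case False
  have z: "((\<lambda>\<tau>. (t-\<tau>) powr (\<beta>-1) * pp M c \<tau>) has_integral 0) {a..c}"
    by (rule has_integral_eq[rotated, OF has_integral_0]) (use M in \<open>auto simp: pp_def max_def power_0_left\<close>)
  have p: "((\<lambda>\<tau>. (t-\<tau>) powr (\<beta>-1) * pp M c \<tau>) has_integral (Beta (real M + 1) \<beta> * (t-c) powr (real M + \<beta>))) {c..t}"
    by (rule has_integral_eq[rotated, OF beta_piece]) (use False M \<beta> in \<open>auto simp: pp_def max_def\<close>)
  have "((\<lambda>\<tau>. (t-\<tau>) powr (\<beta>-1) * pp M c \<tau>) has_integral (0 + Beta (real M + 1) \<beta> * (t-c) powr (real M + \<beta>))) {a..t}"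
    by (rule has_integral_combine[OF ac _ z p]) (use False in auto)
  moreover have "qq (real M + \<beta>) c t = (t-c) powr (real M + \<beta>)" unfolding qq_def using False by simp
  ultimately show ?thesis by simp
qed

lemma floor_al:
  assumes "real i - 1 < \<alpha>" "\<alpha> < real i" "1 \<le> i"
  shows "nat \<lfloor>\<alpha>\<rfloor> + 1 = i"
proof -
  have "\<lfloor>\<alpha>\<rfloor> = int i - 1" using assms by (simp add: floor_eq_iff)
  then show ?thesis using assms by simp
qed

lemma caputo_pp:
  assumes ab: "a < b" and ac: "a < c" and m: "nat \<lfloor>\<alpha>\<rfloor> + 1 = i" and \<beta>: "0 < real i - \<alpha>"
    and i: "1 \<le> i" "i \<le> N - 1" and t: "t \<in> {a..b}"
  shows "caputoL a b \<alpha> (pp N c) t = (fact N / fact (N - i)) / Gamma (real i - \<alpha>) *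
      (Beta (real (N-i) + 1) (real i - \<alpha>) * qq (real (N-i) + (real i - \<alpha>)) c t)"
proof -
  have N: "1 \<le> N" using i by simp
  have M: "1 \<le> N - i" using i by simp
  have eq: "(t - \<tau>) powr (real i - \<alpha> - 1) * hderiv i {a..b} (pp N c) \<tau> =
      (fact N / fact (N - i)) * ((t - \<tau>) powr ((real i - \<alpha>) - 1) * pp (N - i) c \<tau>)" if "\<tau> \<in> {a..t}" for \<tau>
  proof -
    have "\<tau> \<in> {a..b}" using that t by auto
    then show ?thesis using hderiv_pp[OF ab N i(2), of \<tau> c] by (simp add: ac_simps)
  qed
  have I: "((\<lambda>\<tau>. (t - \<tau>) powr ((real i - \<alpha>) - 1) * pp (N - i) c \<tau>) has_integral
      (Beta (real (N-i) + 1) (real i - \<alpha>) * qq (real (N-i) + (real i - \<alpha>)) c t)) {a..t}"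
    using caputo_int_pp[of a c "N - i" "real i - \<alpha>" t] ac M \<beta> t by auto
  have "integral {a..t} (\<lambda>\<tau>. (t - \<tau>) powr (real i - \<alpha> - 1) * hderiv i {a..b} (pp N c) \<tau>) =
      integral {a..t} (\<lambda>\<tau>. (fact N / fact (N - i)) * ((t - \<tau>) powr ((real i - \<alpha>) - 1) * pp (N - i) c \<tau>))"
    by (rule integral_cong) (rule eq)
  also have "\<dots> = (fact N / fact (N - i)) * (Beta (real (N-i) + 1) (real i - \<alpha>) * qq (real (N-i) + (real i - \<alpha>)) c t)"
    using integral_unique[OF I] by simp
  finally show ?thesis unfolding caputoL_def Let_def m by simp
qed

lemma Cn1_caputo_pp:
  assumes ab: "a < b" and ac: "a < c" and m: "nat \<lfloor>\<alpha>\<rfloor> + 1 = i" and \<beta>: "0 < real i - \<alpha>"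
    and i: "1 \<le> i" "i \<le> N - 1"
  shows "Cn_on 1 {a..b} (caputoL a b \<alpha> (pp N c))"
proof -
  define K where "K = (fact N / fact (N - i)) / Gamma (real i - \<alpha>) * Beta (real (N-i) + 1) (real i - \<alpha>)"
  define g where "g = real (N-i) + (real i - \<alpha>)"
  have g1: "1 < g" unfolding g_def using i \<beta> by simp
  have "Cn_on 1 {a..b} (\<lambda>t. K * qq g c t)" by (rule Cn1_qq[OF ab g1])
  moreover have "Cn_on 1 {a..b} (caputoL a b \<alpha> (pp N c)) \<longleftrightarrow> Cn_on 1 {a..b} (\<lambda>t. K * qq g c t)"
    by (rule Cn_on_cong) (use caputo_pp[OF ab ac m \<beta> i] in \<open>simp add: K_def g_def\<close>)
  ultimately show ?thesis by simp
qed

lemma caputo_lin: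
  fixes f g :: "real \<Rightarrow> real"
  assumes ab: "a < b" and f: "Cn_on n {a..b} f" and g: "Cn_on n {a..b} g"
    and mn: "nat \<lfloor>\<alpha>\<rfloor> + 1 \<le> n" and \<beta>: "0 < real (nat \<lfloor>\<alpha>\<rfloor> + 1) - \<alpha>" and t: "t \<in> {a..b}"
  shows "caputoL a b \<alpha> (\<lambda>s. f s + c * g s) t = caputoL a b \<alpha> f t + c * caputoL a b \<alpha> g t"
proof -
  define m where "m = nat \<lfloor>\<alpha>\<rfloor> + 1"
  have mn': "m \<le> n" unfolding m_def using mn .
  have \<beta>': "0 < real m - \<alpha>" unfolding m_def using \<beta> .
  have at: "a \<le> t" using t by auto
  have sub: "{a..t} \<subseteq> {a..b}" using t by auto
  have cf: "continuous_on {a..t} (hderiv m {a..b} f)"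
    using continuous_on_subset[OF Cn_on_cont[OF f mn'] sub] .
  have cg: "continuous_on {a..t} (hderiv m {a..b} g)"
    using continuous_on_subset[OF Cn_on_cont[OF g mn'] sub] .
  have if1: "(\<lambda>\<tau>. (t - \<tau>) powr (real m - \<alpha> - 1) * hderiv m {a..b} f \<tau>) integrable_on {a..t}"
    using set_borel_integral_eq_integral(1)[OF kerL_facts(1)[OF at \<beta>' cf]] .
  have ig1: "(\<lambda>\<tau>. (t - \<tau>) powr (real m - \<alpha> - 1) * hderiv m {a..b} g \<tau>) integrable_on {a..t}"
    using set_borel_integral_eq_integral(1)[OF kerL_facts(1)[OF at \<beta>' cg]] .
  have eq: "(t - \<tau>) powr (real m - \<alpha> - 1) * hderiv m {a..b} (\<lambda>s. f s + c * g s) \<tau> =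
      (t - \<tau>) powr (real m - \<alpha> - 1) * hderiv m {a..b} f \<tau> + c * ((t - \<tau>) powr (real m - \<alpha> - 1) * hderiv m {a..b} g \<tau>)"
    if "\<tau> \<in> {a..t}" for \<tau>
    using hderiv_lin[OF ab f g mn', of \<tau> c] that sub by (auto simp: algebra_simps)
  have "integral {a..t} (\<lambda>\<tau>. (t - \<tau>) powr (real m - \<alpha> - 1) * hderiv m {a..b} (\<lambda>s. f s + c * g s) \<tau>) =
     integral {a..t} (\<lambda>\<tau>. (t - \<tau>) powr (real m - \<alpha> - 1) * hderiv m {a..b} f \<tau> + c * ((t - \<tau>) powr (real m - \<alpha> - 1) * hderiv m {a..b} g \<tau>))"
    by (rule integral_cong) (rule eq)
  also have "\<dots> = integral {a..t} (\<lambda>\<tau>. (t - \<tau>) powr (real m - \<alpha> - 1) * hderiv m {a..b} f \<tau>) +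
     c * integral {a..t} (\<lambda>\<tau>. (t - \<tau>) powr (real m - \<alpha> - 1) * hderiv m {a..b} g \<tau>)"
    using integral_add[OF if1 integrable_on_mult_right[OF ig1]] by simp
  finally have "integral {a..t} (\<lambda>\<tau>. (t - \<tau>) powr (real m - \<alpha> - 1) * hderiv m {a..b} (\<lambda>s. f s + c * g s) \<tau>) =
     integral {a..t} (\<lambda>\<tau>. (t - \<tau>) powr (real m - \<alpha> - 1) * hderiv m {a..b} f \<tau>) +
     c * integral {a..t} (\<lambda>\<tau>. (t - \<tau>) powr (real m - \<alpha> - 1) * hderiv m {a..b} g \<tau>)" .
  then show ?thesis unfolding caputoL_def Let_def m_def[symmetric] by (simp add: add_divide_distrib)
qed

lemma ibp:
  fixes f f' g g' :: "real \<Rightarrow> real"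
  assumes ab: "a \<le> b"
    and df: "\<And>t. t \<in> {a..b} \<Longrightarrow> (f has_vector_derivative f' t) (at t within {a..b})"
    and dg: "\<And>t. t \<in> {a..b} \<Longrightarrow> (g has_vector_derivative g' t) (at t within {a..b})"
    and cf': "continuous_on {a..b} f'" and cg': "continuous_on {a..b} g'"
  shows "integral {a..b} (\<lambda>t. f' t * g t) = f b * g b - f a * g a - integral {a..b} (\<lambda>t. f t * g' t)"
proof -
  have cf: "continuous_on {a..b} f"
    using df has_vector_derivative_continuous continuous_on_eq_continuous_within by blast
  have cg: "continuous_on {a..b} g"
    using dg has_vector_derivative_continuous continuous_on_eq_continuous_within by blast
  have d: "((\<lambda>t. f t * g t) has_vector_derivative (f' t * g t + f t * g' t)) (at t within {a..b})"
    if t: "t \<in> {a..b}" for t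
  proof -
    have "((\<lambda>t. f t * g t) has_real_derivative (f' t * g t + g' t * f t)) (at t within {a..b})"
      using DERIV_mult[OF df[OF t, unfolded has_real_derivative_iff_has_vector_derivative[symmetric]]
          dg[OF t, unfolded has_real_derivative_iff_has_vector_derivative[symmetric]]] by simp
    then show ?thesis by (simp add: has_real_derivative_iff_has_vector_derivative ac_simps)
  qed
  have ftc: "((\<lambda>t. f' t * g t + f t * g' t) has_integral (f b * g b - f a * g a)) {a..b}"
    using fundamental_theorem_of_calculus[OF ab d] by simp
  have i1: "(\<lambda>t. f' t * g t) integrable_on {a..b}" by (intro integrable_continuous_real continuous_intros cf' cg)
  have i2: "(\<lambda>t. f t * g' t) integrable_on {a..b}" by (intro integrable_continuous_real continuous_intros cf cg')
  have "integral {a..b} (\<lambda>t. f' t * g t) + integral {a..b} (\<lambda>t. f t * g' t) = f b * g b - f a * g a"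
    using integral_unique[OF ftc] integral_add[OF i1 i2] by simp
  then show ?thesis by simp
qed

lemma ibp_iter:
  fixes f g :: "real \<Rightarrow> real"
  assumes ab: "a < b" and f: "Cn_on i {a..b} f" and g: "Cn_on i {a..b} g"
  shows "r \<le> i \<Longrightarrow> integral {a..b} (\<lambda>t. hderiv i {a..b} f t * g t) =
    (\<Sum>k<r. (-1)^k * (hderiv (i-1-k) {a..b} f b * hderiv k {a..b} g b - hderiv (i-1-k) {a..b} f a * hderiv k {a..b} g a))
    + (-1)^r * integral {a..b} (\<lambda>t. hderiv (i-r) {a..b} f t * hderiv r {a..b} g t)"
proof (induction r)
  case 0 then show ?case by simp
next
  case (Suc r)
  have ri: "r < i" using Suc.prems by simp
  have e1: "Suc (i - Suc r) = i - r" using ri by simp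
  have df: "(hderiv (i - Suc r) {a..b} f has_vector_derivative hderiv (i - r) {a..b} f t) (at t within {a..b})"
    if "t \<in> {a..b}" for t
  proof -
    have k: "i - Suc r < i" using ri by simp
    have "(hderiv (i - Suc r) {a..b} f has_vector_derivative hderiv (Suc (i - Suc r)) {a..b} f t) (at t within {a..b})"
      using f k that unfolding Cn_on_def by blast
    then show ?thesis unfolding e1 .
  qed
  have dg: "(hderiv r {a..b} g has_vector_derivative hderiv (Suc r) {a..b} g t) (at t within {a..b})"
    if "t \<in> {a..b}" for t
    using g ri that unfolding Cn_on_def by blast
  have cf': "continuous_on {a..b} (hderiv (i - r) {a..b} f)" by (rule Cn_on_cont[OF f]) simp
  have cg': "continuous_on {a..b} (hderiv (Suc r) {a..b} g)" by (rule Cn_on_cont[OF g]) (use ri in simp)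
  have step: "integral {a..b} (\<lambda>t. hderiv (i - r) {a..b} f t * hderiv r {a..b} g t) =
      hderiv (i - Suc r) {a..b} f b * hderiv r {a..b} g b - hderiv (i - Suc r) {a..b} f a * hderiv r {a..b} g a
      - integral {a..b} (\<lambda>t. hderiv (i - Suc r) {a..b} f t * hderiv (Suc r) {a..b} g t)"
    by (rule ibp[OF _ df dg cf' cg']) (use ab in auto)
  have e2: "i - 1 - r = i - Suc r" by simp
  show ?case
    unfolding Suc.IH[OF less_imp_le[OF ri]] step sum.lessThan_Suc e2
    by (simp add: algebra_simps)
qed


lemma pp_deriv_c:
  assumes "2 \<le> k"
  shows "((\<lambda>x. pp k x t) has_real_derivative (- real k * pp (k-1) x t)) (at x)"
proof -
  have e: "pp j y t = pp j (-t) (-y)" for j y unfolding pp_def by simp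
  have d1: "(pp k (-t) has_real_derivative (real k * pp (k-1) (-t) (-x))) (at (-x))" by (rule pp_deriv[OF assms])
  have d2: "((\<lambda>y. - y) has_real_derivative -1) (at x)" by (auto intro!: derivative_eq_intros)
  have "((\<lambda>y. pp k (-t) (-y)) has_real_derivative (real k * pp (k-1) (-t) (-x)) * -1) (at x)"
    using DERIV_chain2[OF d1 d2] .
  then show ?thesis unfolding e[symmetric] by simp
qed

lemma G_deriv2:
  assumes ab: "a \<le> b" and h: "continuous_on {a..b} h" and k: "2 \<le> k" and c: "c \<in> {a..b}"
  shows "((\<lambda>c. integral {a..b} (\<lambda>\<tau>. pp k c \<tau> * h \<tau>)) has_real_derivative
      (- real k * integral {a..b} (\<lambda>\<tau>. pp (k-1) c \<tau> * h \<tau>))) (at c within {a..b})"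
proof -
  have fx: "((\<lambda>x. pp k x t * h t) has_vector_derivative (- real k * pp (k-1) x t * h t)) (at x within {a..b})"
    if "x \<in> {a..b}" "t \<in> cbox a b" for x t
  proof -
    have "((\<lambda>x. pp k x t * h t) has_real_derivative (- real k * pp (k-1) x t) * h t) (at x)"
      by (rule DERIV_cmult_right[OF pp_deriv_c[OF k]])
    then show ?thesis
      by (simp add: has_real_derivative_iff_has_vector_derivative has_vector_derivative_at_within)
  qed
  have int: "(\<lambda>t. pp k x t * h t) integrable_on cbox a b" if "x \<in> {a..b}" for x
    by (simp only: cbox_interval) (intro integrable_continuous_real continuous_intros pp_cont h)
  have ch: "continuous_on ({a..b} \<times> {a..b}) (\<lambda>p. h (snd p))"
    by (rule continuous_on_compose2[OF h continuous_on_snd[OF continuous_on_id]]) auto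
  have "continuous_on ({a..b} \<times> {a..b}) (\<lambda>p. - real k * (max (snd p - fst p) 0)^(k-1) * h (snd p))"
    by (intro continuous_intros ch)
  then have cf: "continuous_on ({a..b} \<times> cbox a b) (\<lambda>(x, t). - real k * pp (k-1) x t * h t)"
    by (simp add: pp_def case_prod_unfold cbox_interval)
  have "((\<lambda>x. integral (cbox a b) (\<lambda>t. pp k x t * h t)) has_vector_derivative
      integral (cbox a b) (\<lambda>t. - real k * pp (k-1) c t * h t)) (at c within {a..b})"
    by (rule leibniz_rule_vector_derivative[where f="\<lambda>x t. pp k x t * h t" and fx="\<lambda>x t. - real k * pp (k-1) x t * h t",
          OF fx int cf c]) auto
  then show ?thesis
    by (simp add: cbox_interval has_real_derivative_iff_has_vector_derivative mult.assoc)
qed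

lemma G_deriv1:
  assumes ab: "a \<le> b" and h: "continuous_on {a..b} h" and c: "c \<in> {a..b}"
  shows "((\<lambda>c. integral {a..b} (\<lambda>\<tau>. pp 1 c \<tau> * h \<tau>)) has_real_derivative
      (- integral {c..b} h)) (at c within {a..b})"
proof -
  define R where "R x = integral {x..b} (\<lambda>\<tau>. \<tau> * h \<tau>) - x * integral {x..b} h" for x
  have rep: "integral {a..b} (\<lambda>\<tau>. pp 1 x \<tau> * h \<tau>) = R x" if x: "x \<in> {a..b}" for x
  proof -
    have i: "(\<lambda>\<tau>. pp 1 x \<tau> * h \<tau>) integrable_on {a..b}"
      by (intro integrable_continuous_real continuous_intros pp_cont h)
    have z: "integral {a..x} (\<lambda>\<tau>. pp 1 x \<tau> * h \<tau>) = 0"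
    proof -
      have "integral {a..x} (\<lambda>\<tau>. pp 1 x \<tau> * h \<tau>) = integral {a..x} (\<lambda>\<tau>. 0)"
        by (rule integral_cong) (auto simp: pp_def)
      then show ?thesis by simp
    qed
    have sub: "{x..b} \<subseteq> {a..b}" using x by auto
    have hx: "continuous_on {x..b} h" using continuous_on_subset[OF h sub] .
    have i1: "(\<lambda>\<tau>. \<tau> * h \<tau>) integrable_on {x..b}" by (intro integrable_continuous_real continuous_intros hx)
    have i2: "h integrable_on {x..b}" by (intro integrable_continuous_real hx)
    have "integral {x..b} (\<lambda>\<tau>. pp 1 x \<tau> * h \<tau>) = integral {x..b} (\<lambda>\<tau>. \<tau> * h \<tau> - x * h \<tau>)"
      by (rule integral_cong) (auto simp: pp_def algebra_simps)
    also have "\<dots> = R x" unfolding R_def using integral_diff[OF i1 integrable_on_mult_right[OF i2, of x]] by simp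
    finally have p: "integral {x..b} (\<lambda>\<tau>. pp 1 x \<tau> * h \<tau>) = R x" .
    have "integral {a..x} (\<lambda>\<tau>. pp 1 x \<tau> * h \<tau>) + integral {x..b} (\<lambda>\<tau>. pp 1 x \<tau> * h \<tau>) = integral {a..b} (\<lambda>\<tau>. pp 1 x \<tau> * h \<tau>)"
      using Henstock_Kurzweil_Integration.integral_combine[where a=a and c=x and b=b and f="\<lambda>\<tau>. pp 1 x \<tau> * h \<tau>"] x i by auto
    then show ?thesis using z p by simp
  qed
  have d1: "((\<lambda>x. integral {x..b} (\<lambda>\<tau>. \<tau> * h \<tau>)) has_real_derivative - (c * h c)) (at c within {a..b})"
    by (rule integral_has_real_derivative'[OF _ c]) (intro continuous_intros h)
  have d2: "((\<lambda>x. integral {x..b} h) has_real_derivative - h c) (at c within {a..b})"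
    by (rule integral_has_real_derivative'[OF h c])
  have dR: "(R has_real_derivative - integral {c..b} h) (at c within {a..b})"
  proof -
    have "(R has_real_derivative (- (c * h c) - (1 * integral {c..b} h + (- h c) * c))) (at c within {a..b})"
      unfolding R_def by (rule DERIV_diff[OF d1 DERIV_mult[OF DERIV_ident d2]])
    then show ?thesis by (simp add: algebra_simps)
  qed
  have eq: "integral {a..b} (\<lambda>\<tau>. pp 1 x \<tau> * h \<tau>) = R x" if "x \<in> {a..b}" for x using rep[OF that] .
  show ?thesis
    using has_vector_derivative_transform[OF c eq dR[unfolded has_real_derivative_iff_has_vector_derivative]]
    by (simp add: has_real_derivative_iff_has_vector_derivative)
qed

lemma poly_const_deg0:
  fixes q :: "real poly"
  assumes "degree q = 0"
  shows "poly q x = coeff q 0"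
  using degree_0_id[OF assms] by (metis poly_pCons mult_zero_right add.right_neutral poly_0 pCons_0_0) 

lemma descent:
  assumes ab: "a < b" and h: "continuous_on {a..b} h" and N: "1 \<le> N"
    and P: "\<forall>c\<in>{a<..<b}. integral {a..b} (\<lambda>\<tau>. pp N c \<tau> * h \<tau>) = poly p c" and dp: "degree p \<le> N"
  shows "\<forall>c\<in>{a..b}. h c = 0"
proof -
  define G where "G k c = integral {a..b} (\<lambda>\<tau>. pp k c \<tau> * h \<tau>)" for k c
  have io: "interior {a..b} = {a<..<b}" by simp
  have claim: "d \<le> N - 1 \<Longrightarrow> (\<exists>q. degree q \<le> N - d \<and> (\<forall>c\<in>{a<..<b}. G (N - d) c = poly q c))" for d
  proof (induction d)
    case 0 then show ?case using P dp unfolding G_def by auto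
  next
    case (Suc d)
    then obtain q where q: "degree q \<le> N - d" "\<forall>c\<in>{a<..<b}. G (N - d) c = poly q c" by auto
    define k where "k = N - d"
    have k2: "2 \<le> k" unfolding k_def using Suc.prems by simp
    have eq: "G (k - 1) c = poly (smult (- 1 / real k) (pderiv q)) c" if c: "c \<in> {a<..<b}" for c
    proof -
      have cab: "c \<in> {a..b}" using c by auto
      have "(G k has_real_derivative (- real k * G (k-1) c)) (at c within {a..b})"
        unfolding G_def using G_deriv2[OF less_imp_le[OF ab] h k2 cab] .
      then have d1: "(G k has_real_derivative (- real k * G (k-1) c)) (at c)"
        using at_within_interior[of c "{a..b}"] c io by simp
      have d2: "(G k has_real_derivative poly (pderiv q) c) (at c)"
        by (rule has_field_derivative_transform_within_open[OF poly_DERIV[of q c], where S="{a<..<b}"])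
           (use c q(2) k_def in auto)
      have "- real k * G (k-1) c = poly (pderiv q) c" using DERIV_unique[OF d1 d2] .
      then show ?thesis using k2 by (simp add: field_simps)
    qed
    have "degree (smult (- 1 / real k) (pderiv q)) \<le> N - Suc d"
      using degree_smult_le[of "- 1 / real k" "pderiv q"] q(1) degree_pderiv[of q] unfolding k_def by linarith
    moreover have "N - Suc d = k - 1" unfolding k_def by simp
    ultimately show ?case using eq by metis
  qed
  obtain q1 where q1: "degree q1 \<le> 1" "\<forall>c\<in>{a<..<b}. G 1 c = poly q1 c"
    using claim[of "N - 1"] N by auto
  define K where "K = - coeff (pderiv q1) 0"
  have Hc: "integral {c..b} h = K" if c: "c \<in> {a<..<b}" for c
  proof -
    have cab: "c \<in> {a..b}" using c by auto
    have "(G 1 has_real_derivative (- integral {c..b} h)) (at c within {a..b})"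
      unfolding G_def using G_deriv1[OF less_imp_le[OF ab] h cab] .
    then have d1: "(G 1 has_real_derivative (- integral {c..b} h)) (at c)"
      using at_within_interior[of c "{a..b}"] c io by simp
    have d2: "(G 1 has_real_derivative poly (pderiv q1) c) (at c)"
      by (rule has_field_derivative_transform_within_open[OF poly_DERIV[of q1 c], where S="{a<..<b}"])
         (use c q1(2) in auto)
    have "degree (pderiv q1) = 0" using q1(1) degree_pderiv[of q1] by simp
    then have "poly (pderiv q1) c = coeff (pderiv q1) 0" by (rule poly_const_deg0)
    then show ?thesis using DERIV_unique[OF d1 d2] unfolding K_def by simp
  qed
  have h0: "h c = 0" if c: "c \<in> {a<..<b}" for c
  proof -
    have cab: "c \<in> {a..b}" using c by auto
    have "((\<lambda>x. integral {x..b} h) has_real_derivative - h c) (at c within {a..b})"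
      by (rule integral_has_real_derivative'[OF h cab])
    then have d1: "((\<lambda>x. integral {x..b} h) has_real_derivative - h c) (at c)"
      using at_within_interior[of c "{a..b}"] c io by simp
    have d2: "((\<lambda>x. integral {x..b} h) has_real_derivative 0) (at c)"
      by (rule has_field_derivative_transform_within_open[OF DERIV_const[of K "at c"], where S="{a<..<b}"])
         (use c Hc in auto)
    show ?thesis using DERIV_unique[OF d1 d2] by simp
  qed
  show ?thesis
  proof
    fix c assume c: "c \<in> {a..b}"
    have cl: "closure {a<..<b} = {a..b}" using ab by simp
    show "h c = 0"
      by (rule continuous_constant_on_closure[of "{a<..<b}" h 0]) (use h h0 c cl in auto)
  qed
qed

lemma poly_zero_coeffs:
  fixes e :: "nat \<Rightarrow> real"
  assumes d: "0 < d" and z: "\<forall>s\<in>{0<..<d}. (\<Sum>k<i. e k * s^k) = 0"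
  shows "\<forall>k<i. e k = 0"
proof -
  define q where "q = (\<Sum>k<i. monom (e k) k)"
  have pq: "poly q s = (\<Sum>k<i. e k * s^k)" for s unfolding q_def by (simp add: poly_sum poly_monom)
  have "{0<..<d} \<subseteq> {x. poly q x = 0}" using z pq by auto
  moreover have "infinite {0<..<d}" using d by simp
  ultimately have "infinite {x. poly q x = 0}" using finite_subset by blast
  then have q0: "q = 0" using poly_roots_finite by blast
  show ?thesis
  proof (intro allI impI)
    fix k assume k: "k < i"
    have "coeff q k = e k" unfolding q_def coeff_sum using k by simp
    then show "e k = 0" using q0 by simp
  qed
qed


lemma caputo_zero:
  assumes ab: "a < b" and t: "t \<in> {a..b}"
  shows "caputoL a b \<alpha> (\<lambda>_. 0) t = 0"
proof -
  have "integral {a..t} (\<lambda>\<tau>. (t - \<tau>) powr (real (nat \<lfloor>\<alpha>\<rfloor> + 1) - \<alpha> - 1) * hderiv (nat \<lfloor>\<alpha>\<rfloor> + 1) {a..b} (\<lambda>_. 0) \<tau>)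
      = integral {a..t} (\<lambda>\<tau>. 0)"
  proof (rule integral_cong)
    fix \<tau> assume "\<tau> \<in> {a..t}"
    then have "\<tau> \<in> {a..b}" using t by auto
    then have "hderiv (nat \<lfloor>\<alpha>\<rfloor> + 1) {a..b} (\<lambda>_. 0) \<tau> = 0" by (rule hderiv_zero[OF ab])
    then show "(t - \<tau>) powr (real (nat \<lfloor>\<alpha>\<rfloor> + 1) - \<alpha> - 1) * hderiv (nat \<lfloor>\<alpha>\<rfloor> + 1) {a..b} (\<lambda>_. 0) \<tau> = 0"
      by (simp only: mult_zero_right)
  qed
  then show ?thesis unfolding caputoL_def Let_def by simp
qed

lemma al_facts:
  assumes al: "\<forall>i\<in>{1..n}. real i - 1 < al i \<and> al i < real i" and k: "k \<in> {1..n}"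
  shows "nat \<lfloor>al k\<rfloor> + 1 = k" "0 < real k - al k" "nat \<lfloor>al k\<rfloor> + 1 \<le> n"
    "0 < real (nat \<lfloor>al k\<rfloor> + 1) - al k"
proof -
  show m: "nat \<lfloor>al k\<rfloor> + 1 = k" using floor_al[of k "al k"] al k by auto
  show "0 < real k - al k" using al k by auto
  then show "0 < real (nat \<lfloor>al k\<rfloor> + 1) - al k" using m by simp
  show "nat \<lfloor>al k\<rfloor> + 1 \<le> n" using m k by simp
qed

lemma adm_eta:
  assumes ab: "a < b" and al: "\<forall>i\<in>{1..n}. real i - 1 < al i \<and> al i < real i"
    and i: "i \<in> {1..n}" and c: "c \<in> {a<..<b}"
  shows "admissible n a b al (\<lambda>i j. 0) (\<lambda>k. if k = i then pp (n+1) c else (\<lambda>_. 0))"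
  unfolding admissible_def
proof (intro ballI conjI allI impI)
  fix k assume k: "k \<in> {1..n}"
  have n1: "1 \<le> n" using i by auto
  have ac: "a < c" using c by auto
  show "Cn_on n {a..b} (if k = i then pp (n+1) c else (\<lambda>_. 0))"
    using Cn_pp[OF ab n1] Cn_on_zero[OF ab] by simp
  show "Cn_on 1 {a..b} (caputoL a b (al k) (if k = i then pp (n+1) c else (\<lambda>_. 0)))"
  proof (cases "k = i")
    case True
    have "Cn_on 1 {a..b} (caputoL a b (al i) (pp (n+1) c))"
      by (rule Cn1_caputo_pp[OF ab ac al_facts(1)[OF al i] al_facts(2)[OF al i]]) (use i in auto)
    then show ?thesis using True by simp
  next
    case False
    have "Cn_on 1 {a..b} (caputoL a b (al k) (\<lambda>_. 0)) \<longleftrightarrow> Cn_on 1 {a..b} (\<lambda>_. 0)"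
      by (rule Cn_on_cong) (rule caputo_zero[OF ab])
    then show ?thesis using False Cn_on_zero[OF ab] by simp
  qed
  fix j assume j: "j < k"
  show "hderiv j {a..b} (if k = i then pp (n+1) c else (\<lambda>_. 0)) a = 0"
  proof (cases "k = i")
    case True
    have "hderiv j {a..b} (pp (n+1) c) a = 0"
      by (rule hderiv_pp_a[OF ab ac]) (use j k True in auto)
    then show ?thesis using True by simp
  next
    case False
    then show ?thesis using hderiv_zero[OF ab, of a j] ab by simp
  qed
qed

lemma adm_sum:
  assumes ab: "a < b" and al: "\<forall>i\<in>{1..n}. real i - 1 < al i \<and> al i < real i"
    and x: "admissible n a b al xa x" and \<eta>: "admissible n a b al (\<lambda>i j. 0) \<eta>"
  shows "admissible n a b al xa (\<lambda>k s. x k s + e * \<eta> k s)"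
    "\<And>k t. k \<in> {1..n} \<Longrightarrow> t \<in> {a..b} \<Longrightarrow>
       caputoL a b (al k) (\<lambda>s. x k s + e * \<eta> k s) t = caputoL a b (al k) (x k) t + e * caputoL a b (al k) (\<eta> k) t"
proof -
  show cap: "caputoL a b (al k) (\<lambda>s. x k s + e * \<eta> k s) t = caputoL a b (al k) (x k) t + e * caputoL a b (al k) (\<eta> k) t"
    if k: "k \<in> {1..n}" and t: "t \<in> {a..b}" for k t
  proof -
    have xk: "Cn_on n {a..b} (x k)" and \<eta>k: "Cn_on n {a..b} (\<eta> k)"
      using x \<eta> k unfolding admissible_def by auto
    show ?thesis by (rule caputo_lin[OF ab xk \<eta>k al_facts(3)[OF al k] al_facts(4)[OF al k] t])
  qed
  show "admissible n a b al xa (\<lambda>k s. x k s + e * \<eta> k s)"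
    unfolding admissible_def
  proof (intro ballI conjI allI impI)
    fix k assume k: "k \<in> {1..n}"
    have xk: "Cn_on n {a..b} (x k)" and \<eta>k: "Cn_on n {a..b} (\<eta> k)"
      using x \<eta> k unfolding admissible_def by auto
    have xc: "Cn_on 1 {a..b} (caputoL a b (al k) (x k))" and \<eta>c: "Cn_on 1 {a..b} (caputoL a b (al k) (\<eta> k))"
      using x \<eta> k unfolding admissible_def by auto
    show "Cn_on n {a..b} (\<lambda>s. x k s + e * \<eta> k s)" by (rule Cn_on_lin[OF ab xk \<eta>k])
    have "Cn_on 1 {a..b} (caputoL a b (al k) (\<lambda>s. x k s + e * \<eta> k s)) \<longleftrightarrow>
        Cn_on 1 {a..b} (\<lambda>t. caputoL a b (al k) (x k) t + e * caputoL a b (al k) (\<eta> k) t)"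
      by (rule Cn_on_cong) (rule cap[OF k])
    then show "Cn_on 1 {a..b} (caputoL a b (al k) (\<lambda>s. x k s + e * \<eta> k s))"
      using Cn_on_lin[OF ab xc \<eta>c] by simp
    fix j assume j: "j < k"
    have jn: "j \<le> n" using j k by auto
    have "hderiv j {a..b} (\<lambda>s. x k s + e * \<eta> k s) a = hderiv j {a..b} (x k) a + e * hderiv j {a..b} (\<eta> k) a"
      by (rule hderiv_lin[OF ab xk \<eta>k jn]) (use ab in auto)
    then show "hderiv j {a..b} (\<lambda>s. x k s + e * \<eta> k s) a = xa k j"
      using x \<eta> k j unfolding admissible_def by auto
  qed
qed


lemma cont_vecn:
  assumes "\<And>j. 1 \<le> j \<Longrightarrow> j \<le> n \<Longrightarrow> continuous_on S (F j)"
  shows "continuous_on S (\<lambda>t. vecn n (\<lambda>j. F j t))"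
proof (rule continuous_on_coordinatewise_then_product)
  fix j
  show "continuous_on S (\<lambda>t. vecn n (\<lambda>j. F j t) j)"
  proof (cases "1 \<le> j \<and> j \<le> n")
    case True then show ?thesis using assms[of j] by (simp add: vecn_def)
  next
    case False
    then have e: "(\<lambda>t. vecn n (\<lambda>j. F j t) j) = (\<lambda>t. 0)" by (auto simp: vecn_def)
    show ?thesis unfolding e by (rule continuous_on_const)
  qed
qed

lemma cont_upd:
  fixes A :: "'a::topological_space \<Rightarrow> nat \<Rightarrow> real"
  assumes A: "continuous_on S A" and p: "continuous_on S p"
  shows "continuous_on S (\<lambda>w. (A w)(i := p w))"
proof (rule continuous_on_coordinatewise_then_product)
  fix j
  show "continuous_on S (\<lambda>w. ((A w)(i := p w)) j)"
  proof (cases "j = i")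
    case True then show ?thesis using p by simp
  next
    case False then show ?thesis using continuous_on_product_then_coordinatewise[OF A, of j] by simp
  qed
qed

lemma per_i:
  fixes a b za :: real and n :: nat and al :: "nat \<Rightarrow> real"
    and xa :: "nat \<Rightarrow> nat \<Rightarrow> real" and L :: lagr
    and Z :: "(nat \<Rightarrow> real \<Rightarrow> real) \<Rightarrow> real \<Rightarrow> real"
    and x :: "nat \<Rightarrow> real \<Rightarrow> real"
  assumes ab: "a < b"
    and al: "\<forall>i\<in>{1..n}. real i - 1 < al i \<and> al i < real i"
    and L_C1: "C1_lagr n a b L"
    and Z_sol: "\<forall>y. admissible n a b al xa y \<longrightarrow>
                   Z y a = za \<and>
                   (\<forall>t\<in>{a..b}. (Z y has_real_derivative
                        L t (xvec n y t) (cvec n a b al y t) (Z y t)) (at t within {a..b}))"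
    and x_adm: "admissible n a b al xa x"
    and RL_ex: "\<forall>i\<in>{1..n}. rRL_deriv_exists_cont a b (al i)
                  (\<lambda>t. exp (- integral {a..t} (\<lambda>\<tau>. pLz L \<tau> (xvec n x \<tau>) (cvec n a b al x \<tau>) (Z x \<tau>)))
                        * pLv L i t (xvec n x t) (cvec n a b al x t) (Z x t))"
    and extremal: "\<forall>\<eta>. admissible n a b al (\<lambda>i j. 0) \<eta> \<longrightarrow>
                   ((\<lambda>\<epsilon>. Z (\<lambda>i s. x i s + \<epsilon> * \<eta> i s) b) has_real_derivative 0) (at 0)"
    and i: "i \<in> {1..n}"
  defines "lam \<equiv> \<lambda>t. exp (- integral {a..t} (\<lambda>\<tau>. pLz L \<tau> (xvec n x \<tau>) (cvec n a b al x \<tau>) (Z x \<tau>)))"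
  shows "\<forall>t\<in>{a..b}. lam t * pLx L i t (xvec n x t) (cvec n a b al x t) (Z x t)
           + rRL_deriv a b (al i) (\<lambda>s. lam s * pLv L i s (xvec n x s) (cvec n a b al x s) (Z x s)) t = 0"
    "\<forall>k<i. hderiv k {a..b} (rRL_int b (real i - al i) (\<lambda>s. lam s * pLv L i s (xvec n x s) (cvec n a b al x s) (Z x s))) b = 0"
proof -
  obtain Lt Lx Lv Lz where
    C: "\<forall>(t, x, v, z) \<in> Ldom n a b.
          ((\<lambda>s. L s x v z) has_real_derivative Lt (t, x, v, z)) (at t within {a..b})
        \<and> (\<forall>i\<in>{1..n}. ((\<lambda>s. L t (x(i := s)) v z) has_real_derivative Lx i (t, x, v, z)) (at (x i)))
        \<and> (\<forall>i\<in>{1..n}. ((\<lambda>s. L t x (v(i := s)) z) has_real_derivative Lv i (t, x, v, z)) (at (v i)))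
        \<and> ((\<lambda>s. L t x v s) has_real_derivative Lz (t, x, v, z)) (at z)"
    and cLx: "\<forall>i\<in>{1..n}. continuous_on (Ldom n a b) (Lx i) \<and> continuous_on (Ldom n a b) (Lv i)"
    and cLz: "continuous_on (Ldom n a b) Lz"
    using L_C1 unfolding C1_lagr_def by blast
  define X where "X = (\<lambda>t. xvec n x t)"
  define V where "V = (\<lambda>t. cvec n a b al x t)"
  define N where "N = n + 1"
  have n1: "1 \<le> n" and i1: "1 \<le> i" and "i \<le> n" using i by auto
  have mi: "nat \<lfloor>al i\<rfloor> + 1 = i" using al_facts(1)[OF al i] .
  define \<beta> where "\<beta> = real i - al i"
  have \<beta>0: "0 < \<beta>" unfolding \<beta>_def using al_facts(2)[OF al i] .
  have xk: "Cn_on n {a..b} (x k)" "Cn_on 1 {a..b} (caputoL a b (al k) (x k))" if "k \<in> {1..n}" for k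
    using x_adm that unfolding admissible_def by auto
  have ZODE: "Z x a = za" "\<forall>t\<in>{a..b}. (Z x has_real_derivative L t (X t) (V t) (Z x t)) (at t within {a..b})"
    using Z_sol x_adm unfolding X_def V_def by auto
  have cZ: "continuous_on {a..b} (Z x)"
    using ZODE(2) DERIV_continuous continuous_on_eq_continuous_within by blast
  have cxk: "continuous_on {a..b} (x k)" if "k \<in> {1..n}" for k
    using Cn_on_cont[OF xk(1)[OF that], of 0] by simp
  have cck: "continuous_on {a..b} (caputoL a b (al k) (x k))" if "k \<in> {1..n}" for k
    using Cn_on_cont[OF xk(2)[OF that], of 0] by simp
  have cX: "continuous_on {a..b} X" unfolding X_def xvec_def
    by (rule cont_vecn) (use cxk in auto)
  have cV: "continuous_on {a..b} V" unfolding V_def cvec_def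
    by (rule cont_vecn) (use cck in auto)
  have Xi: "X t i = x i t" for t unfolding X_def xvec_def vecn_def using i by auto
  have Vi: "V t i = caputoL a b (al i) (x i) t" for t unfolding V_def cvec_def vecn_def using i by auto
  have Xupd: "(X t)(i := x i t) = X t" for t using Xi by (metis fun_upd_triv)
  have Vupd: "(V t)(i := caputoL a b (al i) (x i) t) = V t" for t using Vi by (metis fun_upd_triv)
  have inL: "(t, (X t)(i := p), (V t)(i := q), z) \<in> Ldom n a b" if "t \<in> {a..b}" for t p q z
    using that i unfolding Ldom_def X_def V_def xvec_def cvec_def vecn_def by auto
  have inL0: "(t, X t, V t, z) \<in> Ldom n a b" if "t \<in> {a..b}" for t z
    using inL[OF that, of "x i t" "caputoL a b (al i) (x i) t" z] unfolding Xupd Vupd .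
  have Cpt: "((\<lambda>s. L t (xx(i := s)) vv z) has_real_derivative Lx i (t, xx, vv, z)) (at (xx i))
      \<and> ((\<lambda>s. L t xx (vv(i := s)) z) has_real_derivative Lv i (t, xx, vv, z)) (at (vv i))
      \<and> ((\<lambda>s. L t xx vv s) has_real_derivative Lz (t, xx, vv, z)) (at z)"
    if "(t, xx, vv, z) \<in> Ldom n a b" for t xx vv z
    using bspec[OF C that] i by (simp only: prod.case)
  have dLx: "((\<lambda>s. L t ((X t)(i := s)) ((V t)(i := q)) z) has_real_derivative Lx i (t, (X t)(i := p), (V t)(i := q), z)) (at p)"
    if "t \<in> {a..b}" for t p q z
    using conjunct1[OF Cpt[OF inL[OF that, of p q z]]] by (simp only: fun_upd_upd fun_upd_same)
  have dLv: "((\<lambda>s. L t ((X t)(i := p)) ((V t)(i := s)) z) has_real_derivative Lv i (t, (X t)(i := p), (V t)(i := q), z)) (at q)"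
    if "t \<in> {a..b}" for t p q z
    using conjunct1[OF conjunct2[OF Cpt[OF inL[OF that, of p q z]]]] by (simp only: fun_upd_upd fun_upd_same)
  have dLz: "((\<lambda>s. L t ((X t)(i := p)) ((V t)(i := q)) s) has_real_derivative Lz (t, (X t)(i := p), (V t)(i := q), z)) (at z)"
    if "t \<in> {a..b}" for t p q z
    using conjunct2[OF conjunct2[OF Cpt[OF inL[OF that, of p q z]]]] .
  have pLx_eq: "pLx L i t (X t) (V t) z = Lx i (t, X t, V t, z)" if "t \<in> {a..b}" for t z
    unfolding pLx_def by (rule DERIV_imp_deriv) (rule conjunct1[OF Cpt[OF inL0[OF that]]])
  have pLv_eq: "pLv L i t (X t) (V t) z = Lv i (t, X t, V t, z)" if "t \<in> {a..b}" for t z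
    unfolding pLv_def by (rule DERIV_imp_deriv) (rule conjunct1[OF conjunct2[OF Cpt[OF inL0[OF that]]]])
  have pLz_eq: "pLz L t (X t) (V t) z = Lz (t, X t, V t, z)" if "t \<in> {a..b}" for t z
    unfolding pLz_def by (rule DERIV_imp_deriv) (rule conjunct2[OF conjunct2[OF Cpt[OF inL0[OF that]]]])
  have cLxi: "continuous_on (Ldom n a b) (Lx i)" and cLvi: "continuous_on (Ldom n a b) (Lv i)" using cLx i by auto
  have cXf: "continuous_on ({a..b} \<times> (UNIV::(real\<times>real\<times>real) set)) (\<lambda>w. X (fst w))"
    by (rule continuous_on_compose2[OF cX continuous_on_fst[OF continuous_on_id]]) auto
  have cVf: "continuous_on ({a..b} \<times> (UNIV::(real\<times>real\<times>real) set)) (\<lambda>w. V (fst w))"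
    by (rule continuous_on_compose2[OF cV continuous_on_fst[OF continuous_on_id]]) auto
  have cXu: "continuous_on ({a..b} \<times> (UNIV::(real\<times>real\<times>real) set)) (\<lambda>w. (X (fst w))(i := fst (snd w)))"
    by (rule cont_upd[OF cXf]) (intro continuous_intros)
  have cVu: "continuous_on ({a..b} \<times> (UNIV::(real\<times>real\<times>real) set)) (\<lambda>w. (V (fst w))(i := fst (snd (snd w))))"
    by (rule cont_upd[OF cVf]) (intro continuous_intros)
  define \<psi> where "\<psi> = (\<lambda>w::real\<times>real\<times>real\<times>real. (fst w, (X (fst w))(i := fst (snd w)), (V (fst w))(i := fst (snd (snd w))), snd (snd (snd w))))"
  have c\<psi>: "continuous_on ({a..b} \<times> UNIV) \<psi>" unfolding \<psi>_def
    by (intro continuous_intros cXu cVu)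
  have \<psi>L: "\<psi> ` ({a..b} \<times> UNIV) \<subseteq> Ldom n a b" unfolding \<psi>_def using inL by auto
  define lp where "lp = (\<lambda>t p q z. Lx i (t, (X t)(i := p), (V t)(i := q), z))"
  define lq where "lq = (\<lambda>t p q z. Lv i (t, (X t)(i := p), (V t)(i := q), z))"
  define lz where "lz = (\<lambda>t p q z. Lz (t, (X t)(i := p), (V t)(i := q), z))"
  define l where "l = (\<lambda>t p q z. L t ((X t)(i := p)) ((V t)(i := q)) z)"
  have cp: "continuous_on ({a..b} \<times> UNIV) (\<lambda>(t,p,q,z). lp t p q z)"
  proof -
    have "continuous_on ({a..b} \<times> UNIV) (\<lambda>w. Lx i (\<psi> w))" by (rule continuous_on_compose2[OF cLxi c\<psi> \<psi>L])
    then show ?thesis by (simp add: case_prod_unfold lp_def \<psi>_def)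
  qed
  have cq: "continuous_on ({a..b} \<times> UNIV) (\<lambda>(t,p,q,z). lq t p q z)"
  proof -
    have "continuous_on ({a..b} \<times> UNIV) (\<lambda>w. Lv i (\<psi> w))" by (rule continuous_on_compose2[OF cLvi c\<psi> \<psi>L])
    then show ?thesis by (simp add: case_prod_unfold lq_def \<psi>_def)
  qed
  have cz: "continuous_on ({a..b} \<times> UNIV) (\<lambda>(t,p,q,z). lz t p q z)"
  proof -
    have "continuous_on ({a..b} \<times> UNIV) (\<lambda>w. Lz (\<psi> w))" by (rule continuous_on_compose2[OF cLz c\<psi> \<psi>L])
    then show ?thesis by (simp add: case_prod_unfold lz_def \<psi>_def)
  qed
  have c\<phi>: "continuous_on {a..b} (\<lambda>t. (t, X t, V t, Z x t))" by (intro continuous_intros cX cV cZ)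
  have \<phi>L: "(\<lambda>t. (t, X t, V t, Z x t)) ` {a..b} \<subseteq> Ldom n a b" using inL0 by auto
  have cA0: "continuous_on {a..b} (\<lambda>t. Lz (t, X t, V t, Z x t))" by (rule continuous_on_compose2[OF cLz c\<phi> \<phi>L])
  have cFx: "continuous_on {a..b} (\<lambda>t. Lx i (t, X t, V t, Z x t))" by (rule continuous_on_compose2[OF cLxi c\<phi> \<phi>L])
  have cFv: "continuous_on {a..b} (\<lambda>t. Lv i (t, X t, V t, Z x t))" by (rule continuous_on_compose2[OF cLvi c\<phi> \<phi>L])
  have lam_eq: "lam t = exp (- integral {a..t} (\<lambda>\<tau>. Lz (\<tau>, X \<tau>, V \<tau>, Z x \<tau>)))" if t: "t \<in> {a..b}" for t
  proof -
    have "integral {a..t} (\<lambda>\<tau>. pLz L \<tau> (xvec n x \<tau>) (cvec n a b al x \<tau>) (Z x \<tau>)) = integral {a..t} (\<lambda>\<tau>. Lz (\<tau>, X \<tau>, V \<tau>, Z x \<tau>))"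
      by (rule integral_cong) (use pLz_eq t in \<open>auto simp: X_def V_def\<close>)
    then show ?thesis unfolding lam_def by simp
  qed
  have cint: "continuous_on {a..b} (\<lambda>t. integral {a..t} (\<lambda>\<tau>. Lz (\<tau>, X \<tau>, V \<tau>, Z x \<tau>)))"
    using integral_has_real_derivative[OF cA0] DERIV_continuous continuous_on_eq_continuous_within by blast
  have clam: "continuous_on {a..b} lam"
  proof -
    have "continuous_on {a..b} (\<lambda>t. exp (- integral {a..t} (\<lambda>\<tau>. Lz (\<tau>, X \<tau>, V \<tau>, Z x \<tau>))))"
      by (intro continuous_intros cint)
    then show ?thesis by (rule continuous_on_eq) (use lam_eq in auto)
  qed
  have lampos: "lam t > 0" for t unfolding lam_def by simp
  define g where "g = (\<lambda>s. lam s * pLv L i s (X s) (V s) (Z x s))"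
  define f where "f = (\<lambda>s. lam s * pLx L i s (X s) (V s) (Z x s))"
  have cg: "continuous_on {a..b} g"
  proof -
    have "continuous_on {a..b} (\<lambda>s. lam s * Lv i (s, X s, V s, Z x s))" by (intro continuous_intros clam cFv)
    then show ?thesis unfolding g_def by (rule continuous_on_eq) (use pLv_eq in auto)
  qed
  have cf: "continuous_on {a..b} f"
  proof -
    have "continuous_on {a..b} (\<lambda>s. lam s * Lx i (s, X s, V s, Z x s))" by (intro continuous_intros clam cFx)
    then show ?thesis unfolding f_def by (rule continuous_on_eq) (use pLx_eq in auto)
  qed
  define I where "I = rRL_int b \<beta> g"
  have "rRL_deriv_exists_cont a b (al i)
                  (\<lambda>t. exp (- integral {a..t} (\<lambda>\<tau>. pLz L \<tau> (xvec n x \<tau>) (cvec n a b al x \<tau>) (Z x \<tau>)))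
                        * pLv L i t (xvec n x t) (cvec n a b al x t) (Z x t))" using RL_ex i by blast
  then have "Cn_on (nat \<lfloor>al i\<rfloor> + 1) {a..b} (rRL_int b (real (nat \<lfloor>al i\<rfloor> + 1) - al i)
                  (\<lambda>t. exp (- integral {a..t} (\<lambda>\<tau>. pLz L \<tau> (xvec n x \<tau>) (cvec n a b al x \<tau>) (Z x \<tau>)))
                        * pLv L i t (xvec n x t) (cvec n a b al x t) (Z x t)))"
    unfolding rRL_deriv_exists_cont_def .
  then have CnI: "Cn_on i {a..b} I"
    unfolding I_def g_def \<beta>_def X_def V_def lam_def by (simp only: mi)
  define h where "h = (\<lambda>t. f t + (-1)^i * hderiv i {a..b} I t)"
  define Bc where "Bc = (\<lambda>c. \<Sum>k<i. (-1)^k * (fact N / fact (N - (i-1-k)) * (b-c)^(N-(i-1-k))) * hderiv k {a..b} I b)"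
  have NI: "1 \<le> N" "i \<le> N - 1" unfolding N_def using i by auto
  have key: "integral {a..b} (\<lambda>\<tau>. pp N c \<tau> * h \<tau>) = - Bc c" if c: "c \<in> {a<..<b}" for c
  proof -
    have ac: "a < c" and cb: "c < b" using c by auto
    define \<eta> where "\<eta> = (\<lambda>k. if k = i then pp N c else (\<lambda>_::real. 0::real))"
    have a\<eta>: "admissible n a b al (\<lambda>i j. 0) \<eta>" unfolding \<eta>_def N_def by (rule adm_eta[OF ab al i c])
    define DE where "DE = caputoL a b (al i) (pp N c)"
    have "Cn_on 1 {a..b} (caputoL a b (al i) (\<eta> i))" using a\<eta> i unfolding admissible_def by blast
    then have CnDE: "Cn_on 1 {a..b} DE" unfolding DE_def \<eta>_def by simp
    have cDE: "continuous_on {a..b} DE" using Cn_on_cont[OF CnDE, of 0] by simp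
    have cE: "continuous_on {a..b} (pp N c)" by (rule pp_cont)
    define P where "P = x i"
    define Q where "Q = caputoL a b (al i) (x i)"
    have cP: "continuous_on {a..b} P" unfolding P_def using cxk[OF i] .
    have cQ: "continuous_on {a..b} Q" unfolding Q_def using cck[OF i] .
    define y where "y = (\<lambda>e. Z (\<lambda>k s. x k s + e * \<eta> k s))"
    have adm_y: "admissible n a b al xa (\<lambda>k s. x k s + e * \<eta> k s)" for e
      by (rule adm_sum(1)[OF ab al x_adm a\<eta>])
    have xv: "xvec n (\<lambda>k s. x k s + e * \<eta> k s) t = (X t)(i := P t + e * pp N c t)" for e t
      unfolding xvec_def vecn_def X_def P_def \<eta>_def using i by (auto simp: fun_eq_iff)
    have cv: "cvec n a b al (\<lambda>k s. x k s + e * \<eta> k s) t = (V t)(i := Q t + e * DE t)" if t: "t \<in> {a..b}" for e t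
    proof (rule ext)
      fix j
      show "cvec n a b al (\<lambda>k s. x k s + e * \<eta> k s) t j = ((V t)(i := Q t + e * DE t)) j"
      proof (cases "j \<in> {1..n}")
        case True
        have "caputoL a b (al j) (\<lambda>s. x j s + e * \<eta> j s) t = caputoL a b (al j) (x j) t + e * caputoL a b (al j) (\<eta> j) t"
          by (rule adm_sum(2)[OF ab al x_adm a\<eta> True t])
        moreover have "caputoL a b (al j) (\<eta> j) t = (if j = i then DE t else 0)"
          unfolding \<eta>_def DE_def using caputo_zero[OF ab t] by simp
        ultimately show ?thesis using True unfolding cvec_def V_def vecn_def Q_def by auto
      next
        case False
        then have "j \<noteq> i" using i by auto
        then show ?thesis using False unfolding cvec_def V_def vecn_def by auto
      qed
    qed
    have dp: "((\<lambda>s. l t s q z) has_real_derivative lp t p q z) (at p)" if "t \<in> {a..b}" for t p q z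
      unfolding l_def lp_def using dLx[OF that] .
    have dq: "((\<lambda>s. l t p s z) has_real_derivative lq t p q z) (at q)" if "t \<in> {a..b}" for t p q z
      unfolding l_def lq_def using dLv[OF that] .
    have dz: "((\<lambda>s. l t p q s) has_real_derivative lz t p q z) (at z)" if "t \<in> {a..b}" for t p q z
      unfolding l_def lz_def using dLz[OF that] .
    have ya: "y e a = y 0 a" for e
      unfolding y_def using conjunct1[OF Z_sol[rule_format, OF adm_y[of e]]] conjunct1[OF Z_sol[rule_format, OF adm_y[of 0]]]
      by simp
    have yd: "(y e has_real_derivative l t (P t + e * pp N c t) (Q t + e * DE t) (y e t)) (at t within {a..b})"
      if t: "t \<in> {a..b}" for e t
    proof -
      have "(Z (\<lambda>k s. x k s + e * \<eta> k s) has_real_derivative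
           L t (xvec n (\<lambda>k s. x k s + e * \<eta> k s) t) (cvec n a b al (\<lambda>k s. x k s + e * \<eta> k s) t)
              (Z (\<lambda>k s. x k s + e * \<eta> k s) t)) (at t within {a..b})"
        using bspec[OF conjunct2[OF Z_sol[rule_format, OF adm_y[of e]]] t] .
      then show ?thesis unfolding y_def l_def xv cv[OF t] .
    qed
    note ode = ode_lin[OF ab dp dq dz cp cq cz cP cQ cE cDE ya yd]
    have y0: "y 0 = Z x" unfolding y_def by simp
    have lz_eq: "lz \<tau> (P \<tau>) (Q \<tau>) (y 0 \<tau>) = pLz L \<tau> (xvec n x \<tau>) (cvec n a b al x \<tau>) (Z x \<tau>)" if "\<tau> \<in> {a..b}" for \<tau>
      unfolding lz_def P_def Q_def y0 Xupd Vupd using pLz_eq[OF that] unfolding X_def V_def by simp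
    have lp_eq: "lp \<tau> (P \<tau>) (Q \<tau>) (y 0 \<tau>) = pLx L i \<tau> (X \<tau>) (V \<tau>) (Z x \<tau>)" if "\<tau> \<in> {a..b}" for \<tau>
      unfolding lp_def P_def Q_def y0 Xupd Vupd using pLx_eq[OF that] by simp
    have lq_eq: "lq \<tau> (P \<tau>) (Q \<tau>) (y 0 \<tau>) = pLv L i \<tau> (X \<tau>) (V \<tau>) (Z x \<tau>)" if "\<tau> \<in> {a..b}" for \<tau>
      unfolding lq_def P_def Q_def y0 Xupd Vupd using pLv_eq[OF that] by simp
    have ex_eq: "exp (- integral {a..t} (\<lambda>\<tau>. lz \<tau> (P \<tau>) (Q \<tau>) (y 0 \<tau>))) = lam t" if t: "t \<in> {a..b}" for t
    proof -
      have "integral {a..t} (\<lambda>\<tau>. lz \<tau> (P \<tau>) (Q \<tau>) (y 0 \<tau>)) = integral {a..t} (\<lambda>\<tau>. pLz L \<tau> (xvec n x \<tau>) (cvec n a b al x \<tau>) (Z x \<tau>))"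
        by (rule integral_cong) (use lz_eq t in auto)
      then show ?thesis unfolding lam_def by simp
    qed
    have D0: "integral {a..b} (\<lambda>t. exp (- integral {a..t} (\<lambda>\<tau>. lz \<tau> (P \<tau>) (Q \<tau>) (y 0 \<tau>)))
          * (lp t (P t) (Q t) (y 0 t) * pp N c t + lq t (P t) (Q t) (y 0 t) * DE t))
        / exp (- integral {a..b} (\<lambda>\<tau>. lz \<tau> (P \<tau>) (Q \<tau>) (y 0 \<tau>)))
       = integral {a..b} (\<lambda>t. f t * pp N c t + g t * DE t) / lam b"
    proof -
      have "integral {a..b} (\<lambda>t. exp (- integral {a..t} (\<lambda>\<tau>. lz \<tau> (P \<tau>) (Q \<tau>) (y 0 \<tau>)))
          * (lp t (P t) (Q t) (y 0 t) * pp N c t + lq t (P t) (Q t) (y 0 t) * DE t))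
          = integral {a..b} (\<lambda>t. f t * pp N c t + g t * DE t)"
        by (rule integral_cong) (use ex_eq lp_eq lq_eq in \<open>simp add: f_def g_def algebra_simps\<close>)
      then show ?thesis using ex_eq[of b] ab by simp
    qed
    have ext0: "((\<lambda>e. y e b) has_real_derivative 0) (at 0)"
      using extremal a\<eta> unfolding y_def by blast
    have S1: "integral {a..b} (\<lambda>t. f t * pp N c t + g t * DE t) = 0"
      using DERIV_unique[OF ode ext0] D0 lampos[of b] by simp
    define u where "u = hderiv i {a..b} (pp N c)"
    have Cnpp: "Cn_on i {a..b} (pp N c)" using Cn_on_mono[OF Cn_pp[OF ab n1] \<open>i \<le> n\<close>] unfolding N_def .
    have cu: "continuous_on {a..b} u" unfolding u_def using Cn_on_cont[OF Cnpp order_refl] .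
    have DE_eq: "DE t = integral {a..t} (\<lambda>\<tau>. (t - \<tau>) powr (\<beta> - 1) * u \<tau>) / Gamma \<beta>" for t
      unfolding DE_def caputoL_def Let_def mi u_def \<beta>_def by simp
    have S2: "integral {a..b} (\<lambda>t. g t * DE t) = integral {a..b} (\<lambda>\<tau>. u \<tau> * I \<tau>)"
    proof -
      have "integral {a..b} (\<lambda>t. g t * DE t) = integral {a..b} (\<lambda>t. g t * integral {a..t} (\<lambda>\<tau>. (t - \<tau>) powr (\<beta> - 1) * u \<tau>)) / Gamma \<beta>"
        unfolding DE_eq by (simp add: times_divide_eq_right)
      also have "\<dots> = integral {a..b} (\<lambda>\<tau>. u \<tau> * integral {\<tau>..b} (\<lambda>t. (t - \<tau>) powr (\<beta> - 1) * g t)) / Gamma \<beta>"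
        using fubini_tri[OF less_imp_le[OF ab] \<beta>0 cu cg] by simp
      also have "\<dots> = integral {a..b} (\<lambda>\<tau>. u \<tau> * I \<tau>)"
        unfolding I_def rRL_int_def by (simp add: times_divide_eq_right)
      finally show ?thesis .
    qed
    have S3: "integral {a..b} (\<lambda>\<tau>. u \<tau> * I \<tau>) = Bc c + (-1)^i * integral {a..b} (\<lambda>t. pp N c t * hderiv i {a..b} I t)"
    proof -
      have "integral {a..b} (\<lambda>\<tau>. u \<tau> * I \<tau>) =
        (\<Sum>k<i. (-1)^k * (hderiv (i-1-k) {a..b} (pp N c) b * hderiv k {a..b} I b - hderiv (i-1-k) {a..b} (pp N c) a * hderiv k {a..b} I a))
        + (-1)^i * integral {a..b} (\<lambda>t. hderiv (i-i) {a..b} (pp N c) t * hderiv i {a..b} I t)"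
        unfolding u_def using ibp_iter[OF ab Cnpp CnI, of i] by simp
      also have "(\<Sum>k<i. (-1)^k * (hderiv (i-1-k) {a..b} (pp N c) b * hderiv k {a..b} I b - hderiv (i-1-k) {a..b} (pp N c) a * hderiv k {a..b} I a)) = Bc c"
        unfolding Bc_def
      proof (rule sum.cong[OF refl])
        fix k assume k: "k \<in> {..<i}"
        have kk: "i - 1 - k \<le> N - 1" using k NI by auto
        show "(-1)^k * (hderiv (i-1-k) {a..b} (pp N c) b * hderiv k {a..b} I b - hderiv (i-1-k) {a..b} (pp N c) a * hderiv k {a..b} I a)
            = (-1)^k * (fact N / fact (N - (i-1-k)) * (b-c)^(N-(i-1-k))) * hderiv k {a..b} I b"
          using hderiv_pp_a[OF ab ac NI(1) kk] hderiv_pp_b[OF ab cb NI(1) kk] by simp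
      qed
      finally show ?thesis by simp
    qed
    have i1: "(\<lambda>t. f t * pp N c t) integrable_on {a..b}" by (intro integrable_continuous_real continuous_intros cf cE)
    have i2: "(\<lambda>t. g t * DE t) integrable_on {a..b}" by (intro integrable_continuous_real continuous_intros cg cDE)
    have cIi: "continuous_on {a..b} (hderiv i {a..b} I)" using Cn_on_cont[OF CnI order_refl] .
    have i3: "(\<lambda>t. pp N c t * hderiv i {a..b} I t) integrable_on {a..b}"
      by (intro integrable_continuous_real continuous_intros cIi cE)
    have "integral {a..b} (\<lambda>\<tau>. pp N c \<tau> * h \<tau>) = integral {a..b} (\<lambda>t. f t * pp N c t + (-1)^i * (pp N c t * hderiv i {a..b} I t))"
      unfolding h_def by (rule integral_cong) (simp add: algebra_simps)
    also have "\<dots> = integral {a..b} (\<lambda>t. f t * pp N c t) + (-1)^i * integral {a..b} (\<lambda>t. pp N c t * hderiv i {a..b} I t)"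
      using integral_add[OF i1 integrable_on_mult_right[OF i3, of "(-1)^i"]] by simp
    also have "integral {a..b} (\<lambda>t. f t * pp N c t) = - integral {a..b} (\<lambda>t. g t * DE t)"
      using S1 integral_add[OF i1 i2] by simp
    finally show ?thesis using S2 S3 by simp
  qed
  have cIi: "continuous_on {a..b} (hderiv i {a..b} I)" using Cn_on_cont[OF CnI order_refl] .
  have ch: "continuous_on {a..b} h" unfolding h_def by (intro continuous_intros cf cIi)
  define d where "d = (\<lambda>k. (-1)^k * (fact N / fact (N - (i-1-k))) * hderiv k {a..b} I b)"
  define pB where "pB = (\<Sum>k<i. smult (d k) ([:b, -1:] ^ (N - (i-1-k))))"
  have poly_pB: "poly pB c = Bc c" for c
    unfolding pB_def Bc_def d_def poly_sum
    by (rule sum.cong[OF refl]) (simp add: algebra_simps)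
  have deg_pB: "degree pB \<le> N"
    unfolding pB_def
  proof (rule degree_sum_le)
    fix k assume k: "k \<in> {..<i}"
    have "degree (smult (d k) ([:b, -1:] ^ (N - (i-1-k)))) \<le> degree ([:b, -1::real:] ^ (N - (i-1-k)))"
      by (rule degree_smult_le)
    also have "\<dots> \<le> degree [:b, -1::real:] * (N - (i-1-k))" by (rule degree_power_le)
    also have "\<dots> \<le> N" by simp
    finally show "degree (smult (d k) ([:b, -1:] ^ (N - (i-1-k)))) \<le> N" .
  qed simp
  have P: "\<forall>c\<in>{a<..<b}. integral {a..b} (\<lambda>\<tau>. pp N c \<tau> * h \<tau>) = poly (- pB) c"
    using key poly_pB by simp
  have h0: "\<forall>c\<in>{a..b}. h c = 0"
    by (rule descent[OF ab ch NI(1) P]) (simp add: deg_pB)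
  have g_eq: "(\<lambda>s. lam s * pLv L i s (xvec n x s) (cvec n a b al x s) (Z x s)) = g"
    unfolding g_def X_def V_def ..
  have rd: "rRL_deriv a b (al i) g t = (-1)^i * hderiv i {a..b} I t" for t
    unfolding rRL_deriv_def Let_def mi I_def \<beta>_def ..
  show "\<forall>t\<in>{a..b}. lam t * pLx L i t (xvec n x t) (cvec n a b al x t) (Z x t)
           + rRL_deriv a b (al i) (\<lambda>s. lam s * pLv L i s (xvec n x s) (cvec n a b al x s) (Z x s)) t = 0"
    unfolding g_eq rd using h0 unfolding h_def f_def X_def V_def by simp
  have B0: "Bc c = 0" if c: "c \<in> {a<..<b}" for c
  proof -
    have "integral {a..b} (\<lambda>\<tau>. pp N c \<tau> * h \<tau>) = integral {a..b} (\<lambda>\<tau>. 0)"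
      by (rule integral_cong) (use h0 in simp)
    then show ?thesis using key[OF c] by simp
  qed
  define e where "e = (\<lambda>k. (-1)^k * (fact N / fact (N + 1 - i + k)) * hderiv k {a..b} I b)"
  have ez: "\<forall>s\<in>{0<..<b - a}. (\<Sum>k<i. e k * s^k) = 0"
  proof
    fix s assume s: "s \<in> {0<..<b - a}"
    have c: "b - s \<in> {a<..<b}" using s by auto
    have "Bc (b - s) = s ^ (N + 1 - i) * (\<Sum>k<i. e k * s^k)"
      unfolding Bc_def e_def sum_distrib_left
    proof (rule sum.cong[OF refl])
      fix k assume k: "k \<in> {..<i}"
      have e1: "N - (i - 1 - k) = (N + 1 - i) + k" using k NI by auto
      have e2: "N + 1 - i + k = (N + 1 - i) + k" by simp
      show "(-1)^k * (fact N / fact (N - (i-1-k)) * (b - (b - s))^(N-(i-1-k))) * hderiv k {a..b} I b =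
          s ^ (N + 1 - i) * ((-1)^k * (fact N / fact (N + 1 - i + k)) * hderiv k {a..b} I b * s^k)"
        unfolding e1 by (simp add: power_add algebra_simps)
    qed
    then have "s ^ (N + 1 - i) * (\<Sum>k<i. e k * s^k) = 0" using B0[OF c] by simp
    then show "(\<Sum>k<i. e k * s^k) = 0" using s by simp
  qed
  have e0: "\<forall>k<i. e k = 0" by (rule poly_zero_coeffs[OF _ ez]) (use ab in simp)
  have I_eq: "rRL_int b (real i - al i) (\<lambda>s. lam s * pLv L i s (xvec n x s) (cvec n a b al x s) (Z x s)) = I"
    unfolding g_eq I_def \<beta>_def ..
  show "\<forall>k<i. hderiv k {a..b} (rRL_int b (real i - al i) (\<lambda>s. lam s * pLv L i s (xvec n x s) (cvec n a b al x s) (Z x s))) b = 0"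
    unfolding I_eq
  proof (intro allI impI)
    fix k assume k: "k < i"
    have "e k = 0" using e0 k by simp
    moreover have "fact N / fact (N + 1 - i + k) \<noteq> (0::real)" by simp
    ultimately show "hderiv k {a..b} I b = 0" unfolding e_def by simp
  qed
qed

theorem theorem3p4:
  fixes a b za :: real and n :: nat and al :: "nat \<Rightarrow> real"
    and xa :: "nat \<Rightarrow> nat \<Rightarrow> real" and L :: lagr
    and Z :: "(nat \<Rightarrow> real \<Rightarrow> real) \<Rightarrow> real \<Rightarrow> real"
    and x :: "nat \<Rightarrow> real \<Rightarrow> real"
  assumes ab: "a < b"
    and al: "\<forall>i\<in>{1..n}. real i - 1 < al i \<and> al i < real i"
    and L_C1: "C1_lagr n a b L"
    and Z_sol: "\<forall>y. admissible n a b al xa y \<longrightarrow>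
                   Z y a = za \<and>
                   (\<forall>t\<in>{a..b}. (Z y has_real_derivative
                        L t (xvec n y t) (cvec n a b al y t) (Z y t)) (at t within {a..b}))"
    and Z_diff: "\<forall>\<eta>. admissible n a b al (\<lambda>i j. 0) \<eta> \<longrightarrow>
                   (\<forall>t\<in>{a..b}. (\<lambda>\<epsilon>. Z (\<lambda>i s. x i s + \<epsilon> * \<eta> i s) t) differentiable (at 0))"
    and x_adm: "admissible n a b al xa x"
    and RL_ex: "\<forall>i\<in>{1..n}. rRL_deriv_exists_cont a b (al i)
                  (\<lambda>t. exp (- integral {a..t} (\<lambda>\<tau>. pLz L \<tau> (xvec n x \<tau>) (cvec n a b al x \<tau>) (Z x \<tau>)))
                        * pLv L i t (xvec n x t) (cvec n a b al x t) (Z x t))"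
    and extremal: "\<forall>\<eta>. admissible n a b al (\<lambda>i j. 0) \<eta> \<longrightarrow>
                   ((\<lambda>\<epsilon>. Z (\<lambda>i s. x i s + \<epsilon> * \<eta> i s) b) has_real_derivative 0) (at 0)"
  shows "(\<forall>i\<in>{1..n}. \<forall>t\<in>{a..b}.
           exp (- integral {a..t} (\<lambda>\<tau>. pLz L \<tau> (xvec n x \<tau>) (cvec n a b al x \<tau>) (Z x \<tau>)))
             * pLx L i t (xvec n x t) (cvec n a b al x t) (Z x t)
           + rRL_deriv a b (al i)
               (\<lambda>s. exp (- integral {a..s} (\<lambda>\<tau>. pLz L \<tau> (xvec n x \<tau>) (cvec n a b al x \<tau>) (Z x \<tau>)))
                    * pLv L i s (xvec n x s) (cvec n a b al x s) (Z x s)) t = 0)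
         \<and> (\<forall>i\<in>{1..n}. \<forall>j<i.
           rRL a b (al i + real j - real i)
               (\<lambda>s. exp (- integral {a..s} (\<lambda>\<tau>. pLz L \<tau> (xvec n x \<tau>) (cvec n a b al x \<tau>) (Z x \<tau>)))
                    * pLv L i s (xvec n x s) (cvec n a b al x s) (Z x s)) b = 0)"
proof -
  have P: "\<forall>t\<in>{a..b}. exp (- integral {a..t} (\<lambda>\<tau>. pLz L \<tau> (xvec n x \<tau>) (cvec n a b al x \<tau>) (Z x \<tau>)))
             * pLx L i t (xvec n x t) (cvec n a b al x t) (Z x t)
           + rRL_deriv a b (al i)
               (\<lambda>s. exp (- integral {a..s} (\<lambda>\<tau>. pLz L \<tau> (xvec n x \<tau>) (cvec n a b al x \<tau>) (Z x \<tau>)))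
                    * pLv L i s (xvec n x s) (cvec n a b al x s) (Z x s)) t = 0"
     "\<forall>k<i. hderiv k {a..b} (rRL_int b (real i - al i)
               (\<lambda>s. exp (- integral {a..s} (\<lambda>\<tau>. pLz L \<tau> (xvec n x \<tau>) (cvec n a b al x \<tau>) (Z x \<tau>)))
                    * pLv L i s (xvec n x s) (cvec n a b al x s) (Z x s))) b = 0"
    if i: "i \<in> {1..n}" for i
    using per_i[OF ab al L_C1 Z_sol x_adm RL_ex extremal i] by simp_all
  show ?thesis
  proof (intro conjI ballI allI impI)
    fix i t assume "i \<in> {1..n}" "t \<in> {a..b}"
    then show "exp (- integral {a..t} (\<lambda>\<tau>. pLz L \<tau> (xvec n x \<tau>) (cvec n a b al x \<tau>) (Z x \<tau>)))
             * pLx L i t (xvec n x t) (cvec n a b al x t) (Z x t)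
           + rRL_deriv a b (al i)
               (\<lambda>s. exp (- integral {a..s} (\<lambda>\<tau>. pLz L \<tau> (xvec n x \<tau>) (cvec n a b al x \<tau>) (Z x \<tau>)))
                    * pLv L i s (xvec n x s) (cvec n a b al x s) (Z x s)) t = 0"
      using P(1) by blast
  next
    fix i j assume i: "i \<in> {1..n}" and j: "j < i"
    define G where "G = (\<lambda>s. exp (- integral {a..s} (\<lambda>\<tau>. pLz L \<tau> (xvec n x \<tau>) (cvec n a b al x \<tau>) (Z x \<tau>)))
                    * pLv L i s (xvec n x s) (cvec n a b al x s) (Z x s))"
    have ali: "real i - 1 < al i" "al i < real i" using al i by auto
    show "rRL a b (al i + real j - real i) G b = 0"
    proof (cases "j = 0")
      case True
      then have "al i + real j - real i < 0" using ali by simp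
      then show ?thesis unfolding rRL_def rRL_int_def by simp
    next
      case False
      then have j1: "1 \<le> j" by simp
      have ge: "\<not> (al i + real j - real i < 0)" using ali j1 by simp
      have mj: "nat \<lfloor>al i + real j - real i\<rfloor> + 1 = j"
        by (rule floor_al) (use ali j1 in auto)
      have e: "real j - (al i + real j - real i) = real i - al i" by simp
      have "hderiv j {a..b} (rRL_int b (real i - al i) G) b = 0" using P(2)[OF i] j unfolding G_def by blast
      then show ?thesis unfolding rRL_def rRL_deriv_def Let_def mj e using ge by simp
    qed
  qed
qed


end
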